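(* Let $M,n,p$ be positive integers with $n+p<M$. Let $A$ ($n\times(n+p)$), $G$ ($(M-n)\times(n+p)$), $D$ ($(M-n)\times(M-n-p)$) be real matrices with $K_0=\begin{pmatrix} A&0\\ G&D\end{pmatrix}$ invertible. For a real $n\times(M-n-p)$ matrix $B$ let $K=\begin{pmatrix} A&B\\ G&D\end{pmatrix}$ and, when $K$ is invertible, write $K^{-1}=\begin{pmatrix} E&C\\ H&F\end{pmatrix}$ with $C$ of size $(n+p)\times(M-n)$, $E$ of size $(n+p)\times n$, $H$ of size $(M-n-p)\times n$, $F$ of size $(M-n-p)\times(M-n)$. Let $L$ be a best rank-$p$ approximation of $C$ obtained by truncating a singular value decomposition of $C$ (so $\operatorname{rank}L\le p$ and $\|C-L\|=\sigma_{p+1}(C)$), and set $J=\begin{pmatrix} E&L\\ H&F\end{pmatrix}$. Then there is $\epsilon_0>0$ such that whenever $\|B\|\le\epsilon_0$: $K$ and $J$ are invertible, $J^{-1}=\begin{pmatrix} \tilde A&0\\ \tilde G&\tilde D\end{pmatrix}$ for some matrices $\tilde A$ ($n\times(n+p)$), $\tilde G$ ($(M-n)\times(n+p)$), $\tilde D$ ($(M-n)\times(M-n-p)$) (i.e. the upper-right $n\times(M-n-p)$ block of $J^{-1}$ vanishes), and $$B=A(L-C)\tilde D,\qquad A-\tilde A=A(L-C)\tilde G.$$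
   Context: $\|\cdot\|$ is the spectral norm; $\sigma_k(X)$ denotes the $k$-th largest singular value of a matrix $X$. *)

theory Defs
  imports "Jordan_Normal_Form.Matrix"
begin

definition vec_norm2 :: "real vec \<Rightarrow> real" where
  "vec_norm2 v = sqrt (v \<bullet> v)"

definition spec_norm :: "real mat \<Rightarrow> real" where
  "spec_norm B = Sup {vec_norm2 (B *\<^sub>v v) | v. v \<in> carrier_vec (dim_col B) \<and> vec_norm2 v \<le> 1}"

definition rect_diag :: "nat \<Rightarrow> nat \<Rightarrow> (nat \<Rightarrow> real) \<Rightarrow> real mat" where
  "rect_diag r c s = mat r c (\<lambda>(i,j). if i = j then s i else 0)"

definition orth_mat :: "nat \<Rightarrow> real mat \<Rightarrow> bool" where
  "orth_mat k U \<longleftrightarrow> U \<in> carrier_mat k k \<and> transpose_mat U * U = 1\<^sub>m k"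

definition trunc_svd :: "nat \<Rightarrow> real mat \<Rightarrow> real mat \<Rightarrow> bool" where
  "trunc_svd p C L \<longleftrightarrow>
    (\<exists>U V s. orth_mat (dim_row C) U \<and> orth_mat (dim_col C) V \<and>
       (\<forall>i. 0 \<le> s i) \<and>
       (\<forall>i j. i \<le> j \<longrightarrow> j < min (dim_row C) (dim_col C) \<longrightarrow> s j \<le> s i) \<and>
       C = U * rect_diag (dim_row C) (dim_col C) s * transpose_mat V \<and>
       L = U * rect_diag (dim_row C) (dim_col C) (\<lambda>i. if i < p then s i else 0) * transpose_mat V)"

end

theory Submission
  imports Defs "Jordan_Normal_Form.Determinant" "HOL-Analysis.L2_Norm"
begin


lemma vn_L2: "vec_norm2 v = L2_set (\<lambda>i. v $ i) {0..<dim_vec v}"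
  unfolding vec_norm2_def L2_set_def scalar_prod_def by (simp add: power2_eq_square)

lemma vn_ge0: "0 \<le> vec_norm2 v"
  unfolding vn_L2 by (rule L2_set_nonneg)

lemma vn_sq: "(vec_norm2 v)^2 = (\<Sum>i\<in>{0..<dim_vec v}. (v$i)^2)"
  unfolding vn_L2 L2_set_def by (simp add: sum_nonneg)

lemma vn_def2: "vec_norm2 v = sqrt (\<Sum>i\<in>{0..<dim_vec v}. (v$i)^2)"
  by (simp add: vn_L2 L2_set_def)

lemma vn_zero_imp: assumes "v \<in> carrier_vec n" "vec_norm2 v = 0" shows "v = 0\<^sub>v n"
proof -
  have "(\<Sum>i\<in>{0..<dim_vec v}. (v$i)^2) = 0" using vn_sq[of v] assms by simp
  hence "\<forall>i\<in>{0..<dim_vec v}. (v$i)^2 = 0" by (subst (asm) sum_nonneg_eq_0_iff) auto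
  thus ?thesis using assms(1) by (intro eq_vecI) auto
qed

lemma vn_zero[simp]: "vec_norm2 (0\<^sub>v n) = 0"
  unfolding vn_def2 by simp

lemma vn_pos: assumes "v \<in> carrier_vec n" "v \<noteq> 0\<^sub>v n" shows "0 < vec_norm2 v"
  using vn_zero_imp[OF assms(1)] assms(2) vn_ge0[of v] by force

lemma vn_add: "dim_vec x = dim_vec y \<Longrightarrow> vec_norm2 (x + y) \<le> vec_norm2 x + vec_norm2 y"
proof -
  assume d: "dim_vec x = dim_vec y"
  have "vec_norm2 (x + y) = L2_set (\<lambda>i. x $ i + y $ i) {0..<dim_vec y}"
    unfolding vn_L2 by (intro L2_set_cong) auto
  also have "\<dots> \<le> L2_set (\<lambda>i. x $ i) {0..<dim_vec y} + L2_set (\<lambda>i. y $ i) {0..<dim_vec y}"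
    by (rule L2_set_triangle_ineq)
  finally show ?thesis unfolding vn_L2 d .
qed


lemma vn_uminus: "vec_norm2 (- x) = vec_norm2 x"
  unfolding vn_def2 by simp

lemma vn_minus: "dim_vec x = dim_vec y \<Longrightarrow> vec_norm2 (x - y) \<le> vec_norm2 x + vec_norm2 y"
proof -
  assume d: "dim_vec x = dim_vec y"
  have "x - y = x + (- y)" using d by (intro eq_vecI) auto
  thus ?thesis using vn_add[of x "-y"] d vn_uminus[of y] by simp
qed

lemma vn_smult: "vec_norm2 (a \<cdot>\<^sub>v x) = \<bar>a\<bar> * vec_norm2 x"
proof -
  have "(\<Sum>i\<in>{0..<dim_vec (a \<cdot>\<^sub>v x)}. ((a \<cdot>\<^sub>v x)$i)^2) = (\<Sum>i\<in>{0..<dim_vec x}. a^2 * (x$i)^2)"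
    by (rule sum.cong) (auto simp: power_mult_distrib)
  also have "\<dots> = a^2 * (\<Sum>i\<in>{0..<dim_vec x}. (x$i)^2)" by (rule sum_distrib_left[symmetric])
  finally show ?thesis unfolding vn_def2 by (simp add: real_sqrt_mult)
qed

lemma vn_comp: assumes "i < dim_vec v" shows "\<bar>v$i\<bar> \<le> vec_norm2 v"
proof -
  have "(v$i)^2 \<le> (\<Sum>i\<in>{0..<dim_vec v}. (v$i)^2)" using assms by (intro member_le_sum) auto
  hence "\<bar>v$i\<bar>^2 \<le> (vec_norm2 v)^2" unfolding vn_sq power2_abs .
  thus ?thesis using vn_ge0[of v] by (rule power2_le_imp_le)
qed

definition bnd :: "real mat \<Rightarrow> real \<Rightarrow> bool" where
  "bnd X c \<longleftrightarrow> (\<forall>x \<in> carrier_vec (dim_col X). vec_norm2 (X *\<^sub>v x) \<le> c * vec_norm2 x)"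

lemma bndD: "bnd X c \<Longrightarrow> x \<in> carrier_vec (dim_col X) \<Longrightarrow> vec_norm2 (X *\<^sub>v x) \<le> c * vec_norm2 x"
  unfolding bnd_def by auto

lemma bnd_mono: "bnd X c \<Longrightarrow> c \<le> d \<Longrightarrow> bnd X d"
  unfolding bnd_def by (meson vn_ge0 mult_right_mono order_trans)

lemma bnd_mult: assumes "bnd X a" "bnd Y b" "X \<in> carrier_mat r k" "Y \<in> carrier_mat k c" "0 \<le> a"
  shows "bnd (X * Y) (a * b)"
  unfolding bnd_def
proof
  fix x :: "real vec" assume x: "x \<in> carrier_vec (dim_col (X * Y))"
  hence x': "x \<in> carrier_vec c" using assms by auto
  have "(X * Y) *\<^sub>v x = X *\<^sub>v (Y *\<^sub>v x)" using assms x' by auto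
  hence "vec_norm2 ((X * Y) *\<^sub>v x) \<le> a * vec_norm2 (Y *\<^sub>v x)"
    using bndD[OF assms(1), of "Y *\<^sub>v x"] assms x' by auto
  also have "\<dots> \<le> a * (b * vec_norm2 x)"
    using bndD[OF assms(2), of x] assms x' by (intro mult_left_mono) auto
  finally show "vec_norm2 ((X * Y) *\<^sub>v x) \<le> a * b * vec_norm2 x" by simp
qed

lemma bnd_add: assumes "bnd X a" "bnd Y b" "X \<in> carrier_mat r c" "Y \<in> carrier_mat r c"
  shows "bnd (X + Y) (a + b)"
  unfolding bnd_def
proof
  fix x :: "real vec" assume x: "x \<in> carrier_vec (dim_col (X + Y))"
  hence x': "x \<in> carrier_vec c" using assms by auto
  have "(X + Y) *\<^sub>v x = X *\<^sub>v x + Y *\<^sub>v x" using assms x' by (metis add_mult_distrib_mat_vec)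
  hence "vec_norm2 ((X + Y) *\<^sub>v x) \<le> vec_norm2 (X *\<^sub>v x) + vec_norm2 (Y *\<^sub>v x)"
    using vn_add[of "X *\<^sub>v x" "Y *\<^sub>v x"] assms by auto
  also have "\<dots> \<le> a * vec_norm2 x + b * vec_norm2 x"
    using bndD[OF assms(1), of x] bndD[OF assms(2), of x] assms x' by (intro add_mono) auto
  finally show "vec_norm2 ((X + Y) *\<^sub>v x) \<le> (a + b) * vec_norm2 x" by (simp add: algebra_simps)
qed

lemma bnd_uminus: assumes "bnd X a" shows "bnd (- X) a"
  unfolding bnd_def
proof
  fix x :: "real vec" assume x: "x \<in> carrier_vec (dim_col (- X))"
  have x2: "x \<in> carrier_vec (dim_col X)" using x by simp
  have d: "dim_vec x = dim_col X" using x2 by simp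
  have eq: "(- X) *\<^sub>v x = - (X *\<^sub>v x)" by (rule uminus_mult_mat_vec[OF d])
  show "vec_norm2 ((- X) *\<^sub>v x) \<le> a * vec_norm2 x" unfolding eq vn_uminus by (rule bndD[OF assms x2])
qed

lemma bnd_minus: assumes "bnd X a" "bnd Y b" "X \<in> carrier_mat r c" "Y \<in> carrier_mat r c"
  shows "bnd (X - Y) (a + b)"
proof -
  have e: "X - Y = X + (- Y)" by (rule minus_add_uminus_mat[OF assms(3,4)])
  have "- Y \<in> carrier_mat r c" using assms(4) by simp
  from bnd_add[OF assms(1) bnd_uminus[OF assms(2)] assms(3) this]
  show ?thesis unfolding e .
qed

lemma bnd_one: "bnd (1\<^sub>m k) 1"
  unfolding bnd_def
proof
  fix x :: "real vec" assume "x \<in> carrier_vec (dim_col (1\<^sub>m k :: real mat))"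
  hence "x \<in> carrier_vec k" by simp
  thus "vec_norm2 (1\<^sub>m k *\<^sub>v x) \<le> 1 * vec_norm2 x" by simp
qed

lemma bnd_sum_abs: "bnd X (\<Sum>i\<in>{0..<dim_row X}. \<Sum>j\<in>{0..<dim_col X}. \<bar>X $$ (i,j)\<bar>)"
  unfolding bnd_def
proof
  fix x :: "real vec" assume x: "x \<in> carrier_vec (dim_col X)"
  have "vec_norm2 (X *\<^sub>v x) \<le> (\<Sum>i\<in>{0..<dim_row X}. \<bar>(X *\<^sub>v x) $ i\<bar>)"
    unfolding vn_L2 dim_mult_mat_vec by (rule L2_set_le_sum_abs)
  also have "\<dots> \<le> (\<Sum>i\<in>{0..<dim_row X}. \<Sum>j\<in>{0..<dim_col X}. \<bar>X $$ (i,j)\<bar> * vec_norm2 x)"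
  proof (rule sum_mono)
    fix i assume i: "i \<in> {0..<dim_row X}"
    have "(X *\<^sub>v x) $ i = row X i \<bullet> x" using i by simp
    also have "\<dots> = (\<Sum>j\<in>{0..<dim_col X}. X $$ (i,j) * x $ j)"
      using i x unfolding scalar_prod_def by (intro sum.cong) auto
    finally have "(X *\<^sub>v x) $ i = (\<Sum>j\<in>{0..<dim_col X}. X $$ (i,j) * x $ j)" .
    hence "\<bar>(X *\<^sub>v x) $ i\<bar> \<le> (\<Sum>j\<in>{0..<dim_col X}. \<bar>X $$ (i,j) * x $ j\<bar>)"
      by (simp add: sum_abs)
    also have "\<dots> \<le> (\<Sum>j\<in>{0..<dim_col X}. \<bar>X $$ (i,j)\<bar> * vec_norm2 x)"
      using x vn_comp[of _ x] by (intro sum_mono) (auto simp: abs_mult intro: mult_left_mono)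
    finally show "\<bar>(X *\<^sub>v x) $ i\<bar> \<le> (\<Sum>j\<in>{0..<dim_col X}. \<bar>X $$ (i,j)\<bar> * vec_norm2 x)" .
  qed
  finally show "vec_norm2 (X *\<^sub>v x) \<le> (\<Sum>i\<in>{0..<dim_row X}. \<Sum>j\<in>{0..<dim_col X}. \<bar>X $$ (i,j)\<bar>) * vec_norm2 x"
    by (simp add: sum_distrib_right)
qed

lemma bnd_zero: "bnd (0\<^sub>m r c) 0"
  using bnd_sum_abs[of "0\<^sub>m r c"] by simp

lemma bnd_exists: "\<exists>c\<ge>0. bnd X c"
  using bnd_sum_abs[of X] by (intro exI[of _ "(\<Sum>i\<in>{0..<dim_row X}. \<Sum>j\<in>{0..<dim_col X}. \<bar>X $$ (i,j)\<bar>)"])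
    (auto intro: sum_nonneg)

lemma bnd_entries: assumes "X \<in> carrier_mat r c" "\<And>i j. i < r \<Longrightarrow> j < c \<Longrightarrow> \<bar>X $$ (i,j)\<bar> \<le> k"
  shows "bnd X (real r * real c * k)"
proof -
  have "(\<Sum>i\<in>{0..<r}. \<Sum>j\<in>{0..<c}. \<bar>X $$ (i,j)\<bar>) \<le> (\<Sum>i\<in>{0..<r}. \<Sum>j\<in>{0..<c}. k)"
    by (rule sum_mono, rule sum_mono, simp add: assms(2))
  also have "\<dots> = real r * real c * k" by simp
  finally have le: "(\<Sum>i\<in>{0..<r}. \<Sum>j\<in>{0..<c}. \<bar>X $$ (i,j)\<bar>) \<le> real r * real c * k" .
  have dims: "dim_row X = r" "dim_col X = c" using assms(1) by auto
  from bnd_sum_abs[of X] have "bnd X (\<Sum>i\<in>{0..<r}. \<Sum>j\<in>{0..<c}. \<bar>X $$ (i,j)\<bar>)" unfolding dims .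
  thus ?thesis using le by (rule bnd_mono)
qed

lemma vn_unit: assumes "j < n" shows "vec_norm2 (unit_vec n j :: real vec) = 1"
proof -
  have "(\<Sum>i\<in>{0..<n}. ((unit_vec n j :: real vec) $ i)^2) = (\<Sum>i\<in>{0..<n}. if i = j then 1 else 0)"
    using assms by (intro sum.cong) auto
  also have "\<dots> = 1" using assms by simp
  finally show ?thesis unfolding vn_def2 by simp
qed

lemma entry_le_bnd: assumes "bnd X k" "i < dim_row X" "j < dim_col X"
  shows "\<bar>X $$ (i,j)\<bar> \<le> k"
proof -
  define e where "e = (unit_vec (dim_col X) j :: real vec)"
  have e: "e \<in> carrier_vec (dim_col X)" unfolding e_def by simp
  have i: "i < dim_vec (X *\<^sub>v e)" using assms(2) by simp
  have "(X *\<^sub>v e) $ i = X $$ (i,j)" unfolding e_def using assms(2,3) by simp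
  hence "\<bar>X $$ (i,j)\<bar> \<le> vec_norm2 (X *\<^sub>v e)" using vn_comp[OF i] by simp
  also have "\<dots> \<le> k * vec_norm2 e" using bndD[OF assms(1) e] .
  also have "vec_norm2 e = 1" unfolding e_def by (rule vn_unit[OF assms(3)])
  finally show ?thesis by simp
qed



lemma orth_isometry: assumes "orth_mat k U" "x \<in> carrier_vec k"
  shows "vec_norm2 (U *\<^sub>v x) = vec_norm2 x"
proof -
  have U: "U \<in> carrier_mat k k" and UU: "transpose_mat U * U = 1\<^sub>m k" using assms(1) unfolding orth_mat_def by auto
  have Ux: "U *\<^sub>v x \<in> carrier_vec k" using U assms(2) by simp
  have "(transpose_mat U *\<^sub>v (U *\<^sub>v x)) \<bullet> x = (U *\<^sub>v x) \<bullet> (U *\<^sub>v x)"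
    by (rule transpose_vec_mult_scalar[OF U assms(2) Ux])
  moreover have "transpose_mat U *\<^sub>v (U *\<^sub>v x) = x"
  proof -
    have "transpose_mat U *\<^sub>v (U *\<^sub>v x) = (transpose_mat U * U) *\<^sub>v x"
      using U assms(2) by (metis assoc_mult_mat_vec transpose_carrier_mat)
    also have "\<dots> = x" unfolding UU using assms(2) by simp
    finally show ?thesis .
  qed
  ultimately have "(U *\<^sub>v x) \<bullet> (U *\<^sub>v x) = x \<bullet> x" by simp
  thus ?thesis unfolding vec_norm2_def by simp
qed

lemma orth_transpose: assumes "orth_mat k U" shows "orth_mat k (transpose_mat U)"
proof -
  have U: "U \<in> carrier_mat k k" and UU: "transpose_mat U * U = 1\<^sub>m k" using assms(1) unfolding orth_mat_def by auto
  have "U * transpose_mat U = 1\<^sub>m k"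
    by (rule mat_mult_left_right_inverse[OF _ U UU]) (use U in simp)
  thus ?thesis unfolding orth_mat_def using U by simp
qed

lemma orth_bnd: assumes "orth_mat k U" shows "bnd U 1"
  unfolding bnd_def
proof
  fix x :: "real vec" assume "x \<in> carrier_vec (dim_col U)"
  hence "x \<in> carrier_vec k" using assms unfolding orth_mat_def by auto
  thus "vec_norm2 (U *\<^sub>v x) \<le> 1 * vec_norm2 x" using orth_isometry[OF assms] by simp
qed

lemma orth_carrier: "orth_mat k U \<Longrightarrow> U \<in> carrier_mat k k"
  unfolding orth_mat_def by simp

lemma orth_tt: "orth_mat k U \<Longrightarrow> transpose_mat U * U = 1\<^sub>m k"
  unfolding orth_mat_def by simp

lemma orth_tt2: "orth_mat k U \<Longrightarrow> U * transpose_mat U = 1\<^sub>m k"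
  using orth_tt[OF orth_transpose] by (metis transpose_transpose)

lemma inv_near_one: assumes X: "X \<in> carrier_mat k k" and b: "bnd X c" and c: "c \<le> 1/2"
  shows "\<exists>Y \<in> carrier_mat k k. (1\<^sub>m k + X) * Y = 1\<^sub>m k \<and> Y * (1\<^sub>m k + X) = 1\<^sub>m k \<and> bnd Y 2"
proof -
  define N where "N = 1\<^sub>m k + X"
  have N: "N \<in> carrier_mat k k" unfolding N_def using X by simp
  have low: "vec_norm2 x \<le> 2 * vec_norm2 (N *\<^sub>v x)" if x: "x \<in> carrier_vec k" for x
  proof -
    have Nx: "N *\<^sub>v x = x + X *\<^sub>v x" unfolding N_def using X x
      by (simp add: add_mult_distrib_mat_vec[OF one_carrier_mat X x])
    have "x = N *\<^sub>v x - X *\<^sub>v x" unfolding Nx using x X by (intro eq_vecI) auto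
    hence "vec_norm2 x \<le> vec_norm2 (N *\<^sub>v x) + vec_norm2 (X *\<^sub>v x)"
      using vn_minus[of "N *\<^sub>v x" "X *\<^sub>v x"] N X by (metis dim_mult_mat_vec carrier_matD(1))
    also have "vec_norm2 (X *\<^sub>v x) \<le> c * vec_norm2 x" using bndD[OF b] x X by simp
    also have "c * vec_norm2 x \<le> 1/2 * vec_norm2 x" using c vn_ge0[of x] by (intro mult_right_mono) auto
    finally show ?thesis by simp
  qed
  have "det N \<noteq> 0"
  proof
    assume "det N = 0"
    then obtain v where v: "v \<in> carrier_vec k" "v \<noteq> 0\<^sub>v k" "N *\<^sub>v v = 0\<^sub>v k"
      using det_0_iff_vec_prod_zero[OF N] by auto
    have "vec_norm2 v \<le> 0" using low[OF v(1)] v(3) by simp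
    thus False using vn_pos[OF v(1,2)] by simp
  qed
  from det_non_zero_imp_unit[OF N this, of "()"]
  obtain Y where Y: "Y \<in> carrier_mat k k" "Y * N = 1\<^sub>m k" "N * Y = 1\<^sub>m k"
    unfolding Units_def ring_mat_simps by auto
  have "bnd Y 2" unfolding bnd_def
  proof
    fix y :: "real vec" assume "y \<in> carrier_vec (dim_col Y)"
    hence y: "y \<in> carrier_vec k" using Y by simp
    have Yy: "Y *\<^sub>v y \<in> carrier_vec k" using Y y by simp
    have "N *\<^sub>v (Y *\<^sub>v y) = y"
    proof -
      have "N *\<^sub>v (Y *\<^sub>v y) = (N * Y) *\<^sub>v y" using N Y y by (metis assoc_mult_mat_vec)
      thus ?thesis using Y y by simp
    qed
    thus "vec_norm2 (Y *\<^sub>v y) \<le> 2 * vec_norm2 y" using low[OF Yy] by simp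
  qed
  thus ?thesis using Y unfolding N_def by blast
qed

lemma wide_kernel: assumes X: "(X :: real mat) \<in> carrier_mat r c" and rc: "r < c"
  shows "\<exists>v \<in> carrier_vec c. v \<noteq> 0\<^sub>v c \<and> X *\<^sub>v v = 0\<^sub>v r"
proof -
  define f where "f = (\<lambda>i. if i < r then row X i else 0\<^sub>v c)"
  define Xp where "Xp = mat\<^sub>r c c (\<lambda>i. if i = c - 1 then 0\<^sub>v c else f i)"
  have fc: "f \<in> {0..<c} \<rightarrow> carrier_vec c" unfolding f_def using X by auto
  have "det Xp = 0" unfolding Xp_def by (rule det_row_0[OF _ fc]) (use rc in auto)
  moreover have Xp: "Xp \<in> carrier_mat c c" unfolding Xp_def by simp
  ultimately obtain v where v: "v \<in> carrier_vec c" "v \<noteq> 0\<^sub>v c" "Xp *\<^sub>v v = 0\<^sub>v c"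
    using det_0_iff_vec_prod_zero[OF Xp] by auto
  have "X *\<^sub>v v = 0\<^sub>v r"
  proof (rule eq_vecI)
    fix i assume "i < dim_vec (0\<^sub>v r :: real vec)"
    hence i: "i < r" by simp
    have rowi: "row Xp i = row X i" unfolding Xp_def f_def using i rc X by (subst row_mat_of_row_fun) auto
    have "(X *\<^sub>v v) $ i = row X i \<bullet> v" using i X by simp
    also have "\<dots> = (Xp *\<^sub>v v) $ i" using i rc Xp rowi by simp
    also have "\<dots> = 0" using v(3) i rc by simp
    finally show "(X *\<^sub>v v) $ i = 0\<^sub>v r $ i" using i by simp
  qed (use X in simp)
  thus ?thesis using v by blast
qed

lemma four_block_eq:
  assumes "A \<in> carrier_mat nr1 nc1" "B \<in> carrier_mat nr1 nc2" "C \<in> carrier_mat nr2 nc1" "D \<in> carrier_mat nr2 nc2"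
    "A' \<in> carrier_mat nr1 nc1" "B' \<in> carrier_mat nr1 nc2" "C' \<in> carrier_mat nr2 nc1" "D' \<in> carrier_mat nr2 nc2"
    and eq: "four_block_mat A B C D = four_block_mat A' B' C' D'"
  shows "A = A'" "B = B'" "C = C'" "D = D'"
proof -
  have e: "four_block_mat A B C D $$ (i,j) = four_block_mat A' B' C' D' $$ (i,j)" for i j
    using eq by simp
  show "A = A'"
  proof (rule eq_matI)
    fix i j assume "i < dim_row A'" "j < dim_col A'"
    thus "A $$ (i,j) = A' $$ (i,j)" using e[of i j] assms(1-8) by simp
  qed (use assms in auto)
  show "B = B'"
  proof (rule eq_matI)
    fix i j assume "i < dim_row B'" "j < dim_col B'"
    thus "B $$ (i,j) = B' $$ (i,j)" using e[of i "j + nc1"] assms(1-8) by simp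
  qed (use assms in auto)
  show "C = C'"
  proof (rule eq_matI)
    fix i j assume "i < dim_row C'" "j < dim_col C'"
    thus "C $$ (i,j) = C' $$ (i,j)" using e[of "i + nr1" j] assms(1-8) by simp
  qed (use assms in auto)
  show "D = D'"
  proof (rule eq_matI)
    fix i j assume "i < dim_row D'" "j < dim_col D'"
    thus "D $$ (i,j) = D' $$ (i,j)" using e[of "i + nr1" "j + nc1"] assms(1-8) by simp
  qed (use assms in auto)
qed



lemma rd_carrier[simp]: "rect_diag r c s \<in> carrier_mat r c"
  unfolding rect_diag_def by simp

lemma rd_dims[simp]: "dim_row (rect_diag r c s) = r" "dim_col (rect_diag r c s) = c"
  unfolding rect_diag_def by simp_all

lemma rd_index[simp]: "i < r \<Longrightarrow> j < c \<Longrightarrow> rect_diag r c s $$ (i,j) = (if i = j then s i else 0)"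
  unfolding rect_diag_def by simp

lemma rd_row: "i < r \<Longrightarrow> row (rect_diag r c s) i = vec c (\<lambda>j. if i = j then s i else 0)"
  by (intro eq_vecI) auto

lemma rd_col: "j < c \<Longrightarrow> col (rect_diag r c s) j = vec r (\<lambda>i. if i = j then s i else 0)"
  by (intro eq_vecI) auto

lemma rd_mult_vec: assumes y: "y \<in> carrier_vec c"
  shows "rect_diag r c s *\<^sub>v y = vec r (\<lambda>i. if i < c then s i * y $ i else 0)"
proof (rule eq_vecI)
  fix i assume "i < dim_vec (vec r (\<lambda>i. if i < c then s i * y $ i else 0))"
  hence i: "i < r" by simp
  have "(rect_diag r c s *\<^sub>v y) $ i = row (rect_diag r c s) i \<bullet> y" using i by simp
  also have "\<dots> = (\<Sum>j\<in>{0..<c}. (if j = i then s i * y $ j else 0))"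
    unfolding rd_row[OF i] scalar_prod_def using y by (intro sum.cong) auto
  also have "\<dots> = (if i < c then s i * y $ i else 0)" by (simp add: sum.delta)
  finally show "(rect_diag r c s *\<^sub>v y) $ i = vec r (\<lambda>i. if i < c then s i * y $ i else 0) $ i" using i by simp
qed simp

lemma rd_mult: "rect_diag a b s * rect_diag b c t = rect_diag a c (\<lambda>i. if i < b then s i * t i else 0)"
proof (rule eq_matI)
  fix i j assume "i < dim_row (rect_diag a c (\<lambda>i. if i < b then s i * t i else 0))"
    "j < dim_col (rect_diag a c (\<lambda>i. if i < b then s i * t i else 0))"
  hence i: "i < a" and j: "j < c" by auto
  have "(rect_diag a b s * rect_diag b c t) $$ (i,j) = row (rect_diag a b s) i \<bullet> col (rect_diag b c t) j"
    using i j by simp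
  also have "\<dots> = (\<Sum>k\<in>{0..<b}. (if k = i then (if i = j then s i * t i else 0) else 0))"
    unfolding rd_row[OF i] rd_col[OF j] scalar_prod_def by (intro sum.cong) auto
  also have "\<dots> = (if i < b then (if i = j then s i * t i else 0) else 0)" by (simp add: sum.delta)
  finally show "(rect_diag a b s * rect_diag b c t) $$ (i,j) = rect_diag a c (\<lambda>i. if i < b then s i * t i else 0) $$ (i,j)"
    using i j by simp
qed auto

lemma sum_if_less: "(\<Sum>i\<in>{0..<(r::nat)}. if i < c then f i else 0) = (\<Sum>i\<in>{0..<min r c}. f i)"
proof -
  have "(\<Sum>i\<in>{0..<r}. if i < c then f i else 0) = (\<Sum>i\<in>{i \<in> {0..<r}. i < c}. f i)"
    by (rule sum.inter_filter[symmetric]) simp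
  also have "{i \<in> {0..<r}. i < c} = {0..<min r c}" by auto
  finally show ?thesis .
qed

lemma rd_norm_sq: assumes y: "y \<in> carrier_vec c"
  shows "(vec_norm2 (rect_diag r c s *\<^sub>v y))^2 = (\<Sum>i\<in>{0..<min r c}. (s i * y $ i)^2)"
proof -
  have "(vec_norm2 (rect_diag r c s *\<^sub>v y))^2 = (\<Sum>i\<in>{0..<r}. (if i < c then s i * y $ i else 0)^2)"
    unfolding vn_sq rd_mult_vec[OF y] by simp
  also have "\<dots> = (\<Sum>i\<in>{0..<r}. if i < c then (s i * y $ i)^2 else 0)" by (intro sum.cong) auto
  finally show ?thesis unfolding sum_if_less .
qed

lemma rd_upper: assumes y: "y \<in> carrier_vec c" and k: "0 \<le> k"
  and h: "\<And>i. i < r \<Longrightarrow> i < c \<Longrightarrow> (s i * y $ i)^2 \<le> k^2 * (y $ i)^2"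
  shows "vec_norm2 (rect_diag r c s *\<^sub>v y) \<le> k * vec_norm2 y"
proof -
  have "(vec_norm2 (rect_diag r c s *\<^sub>v y))^2 \<le> (\<Sum>i\<in>{0..<min r c}. k^2 * (y $ i)^2)"
    unfolding rd_norm_sq[OF y] by (intro sum_mono h) auto
  also have "\<dots> \<le> (\<Sum>i\<in>{0..<c}. k^2 * (y $ i)^2)" by (intro sum_mono2) auto
  also have "\<dots> = (k * vec_norm2 y)^2" unfolding power_mult_distrib vn_sq sum_distrib_left using y by simp
  finally have sq: "(vec_norm2 (rect_diag r c s *\<^sub>v y))^2 \<le> (k * vec_norm2 y)^2" .
  show ?thesis by (rule power2_le_imp_le[OF sq]) (use k vn_ge0[of y] in simp)
qed

lemma rd_lower: assumes y: "y \<in> carrier_vec c" and k: "0 \<le> k"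
  and h: "\<And>i. i < c \<Longrightarrow> k^2 * (y $ i)^2 \<le> (if i < r then (s i * y $ i)^2 else 0)"
  shows "k * vec_norm2 y \<le> vec_norm2 (rect_diag r c s *\<^sub>v y)"
proof -
  have "(k * vec_norm2 y)^2 = (\<Sum>i\<in>{0..<c}. k^2 * (y $ i)^2)"
    unfolding power_mult_distrib vn_sq sum_distrib_left using y by simp
  also have "\<dots> \<le> (\<Sum>i\<in>{0..<c}. if i < r then (s i * y $ i)^2 else 0)" by (intro sum_mono h) auto
  also have "\<dots> = (\<Sum>i\<in>{0..<min c r}. (s i * y $ i)^2)" by (rule sum_if_less)
  also have "\<dots> = (vec_norm2 (rect_diag r c s *\<^sub>v y))^2" unfolding rd_norm_sq[OF y] by (simp add: min.commute)
  finally have sq: "(k * vec_norm2 y)^2 \<le> (vec_norm2 (rect_diag r c s *\<^sub>v y))^2" .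
  show ?thesis by (rule power2_le_imp_le[OF sq]) (rule vn_ge0)
qed

lemma rd_bnd: assumes k: "0 \<le> k" and h: "\<And>i. i < r \<Longrightarrow> i < c \<Longrightarrow> \<bar>s i\<bar> \<le> k"
  shows "bnd (rect_diag r c s) k"
  unfolding bnd_def
proof
  fix y :: "real vec" assume "y \<in> carrier_vec (dim_col (rect_diag r c s))"
  hence y: "y \<in> carrier_vec c" by simp
  show "vec_norm2 (rect_diag r c s *\<^sub>v y) \<le> k * vec_norm2 y"
  proof (rule rd_upper[OF y k])
    fix i assume "i < r" "i < c"
    hence "(s i)^2 \<le> k^2" using h[of i] k by (metis abs_le_square_iff abs_of_nonneg)
    hence "(s i)^2 * (y $ i)^2 \<le> k^2 * (y $ i)^2" by (intro mult_right_mono) auto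
    thus "(s i * y $ i)^2 \<le> k^2 * (y $ i)^2" by (simp add: power_mult_distrib)
  qed
qed



lemma mat_vec_zero[simp]: "A \<in> carrier_mat r c \<Longrightarrow> A *\<^sub>v 0\<^sub>v c = (0\<^sub>v r :: real vec)"
  by (intro eq_vecI) auto

lemma upper_sp:
  fixes C D F0 U V :: "real mat" and s :: "nat \<Rightarrow> real"
  assumes U: "orth_mat r U" and V: "orth_mat m V" and s0: "\<forall>i. 0 \<le> s i"
    and sdec: "\<forall>i j. i \<le> j \<longrightarrow> j < min r m \<longrightarrow> s j \<le> s i"
    and Cdef: "C = U * rect_diag r m s * transpose_mat V"
    and D: "D \<in> carrier_mat m q" and F0: "F0 \<in> carrier_mat q m" and FD: "F0 * D = 1\<^sub>m q"
    and pr: "p < r" and pm: "p < m" and q: "q = m - p"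
    and bCD: "bnd (C * D) \<beta>" and bF0: "bnd F0 f0" and f0: "0 \<le> f0" and beta: "0 \<le> \<beta>"
  shows "s p \<le> \<beta> * f0"
proof -
  have Uc: "U \<in> carrier_mat r r" using U by (rule orth_carrier)
  have Vc: "V \<in> carrier_mat m m" using V by (rule orth_carrier)
  have Vtc: "transpose_mat V \<in> carrier_mat m m" using Vc by simp
  have Sc: "rect_diag r m s \<in> carrier_mat r m" by simp
  have q1: "q - 1 < q" using q pm by simp
  define VD where "VD = transpose_mat V * D"
  have VDc: "VD \<in> carrier_mat m q" unfolding VD_def using Vtc D by simp
  define N1 where "N1 = mat (q - 1) q (\<lambda>(i,j). VD $$ (i + p + 1, j))"
  have N1c: "N1 \<in> carrier_mat (q - 1) q" unfolding N1_def by simp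
  obtain w where w: "w \<in> carrier_vec q" "w \<noteq> 0\<^sub>v q" "N1 *\<^sub>v w = 0\<^sub>v (q - 1)"
    using wide_kernel[OF N1c q1] by blast
  define v where "v = D *\<^sub>v w"
  have vc: "v \<in> carrier_vec m" unfolding v_def using D w(1) by simp
  define y where "y = transpose_mat V *\<^sub>v v"
  have yc: "y \<in> carrier_vec m" unfolding y_def using Vtc vc by simp
  have yVD: "y = VD *\<^sub>v w" unfolding y_def v_def VD_def using Vtc D w(1) by simp
  have y0: "y $ i = 0" if i: "p < i" "i < m" for i
  proof -
    have i1: "i - p - 1 < q - 1" using i q by simp
    have rowN: "row N1 (i - p - 1) = row VD i"
      unfolding N1_def using i1 i VDc by (intro eq_vecI) auto
    have "y $ i = row VD i \<bullet> w" unfolding yVD using i VDc by simp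
    also have "\<dots> = (N1 *\<^sub>v w) $ (i - p - 1)" using i1 N1c rowN by simp
    also have "\<dots> = 0" using w(3) i1 by simp
    finally show ?thesis .
  qed
  have vVy: "v = V *\<^sub>v y"
  proof -
    have "V *\<^sub>v y = (V * transpose_mat V) *\<^sub>v v" unfolding y_def using Vc vc by simp
    also have "\<dots> = v" unfolding orth_tt2[OF V] using vc by simp
    finally show ?thesis by simp
  qed
  have Cv: "C *\<^sub>v v = U *\<^sub>v (rect_diag r m s *\<^sub>v y)"
  proof -
    have USc: "U * rect_diag r m s \<in> carrier_mat r m" using Uc Sc by simp
    have "C *\<^sub>v v = (U * rect_diag r m s) *\<^sub>v y" unfolding Cdef y_def by (rule assoc_mult_mat_vec[OF USc Vtc vc])
    also have "\<dots> = U *\<^sub>v (rect_diag r m s *\<^sub>v y)" using Uc Sc yc by (rule assoc_mult_mat_vec)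
    finally show ?thesis .
  qed
  have nCv: "vec_norm2 (C *\<^sub>v v) = vec_norm2 (rect_diag r m s *\<^sub>v y)"
    unfolding Cv by (rule orth_isometry[OF U mult_mat_vec_carrier[OF Sc yc]])
  have low: "s p * vec_norm2 y \<le> vec_norm2 (rect_diag r m s *\<^sub>v y)"
  proof (rule rd_lower[OF yc])
    show "0 \<le> s p" using s0 by simp
  next
    fix i assume im: "i < m"
    show "(s p)^2 * (y $ i)^2 \<le> (if i < r then (s i * y $ i)^2 else 0)"
    proof (cases "i \<le> p")
      case True
      hence ir: "i < r" using pr by simp
      have "s p \<le> s i" using sdec True pr pm by auto
      hence "(s p)^2 \<le> (s i)^2" using s0 by (intro power_mono) auto
      hence "(s p)^2 * (y $ i)^2 \<le> (s i)^2 * (y $ i)^2" by (intro mult_right_mono) auto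
      thus ?thesis using ir by (simp add: power_mult_distrib)
    next
      case False
      thus ?thesis using y0[of i] im by simp
    qed
  qed
  have nyv: "vec_norm2 y = vec_norm2 v" unfolding y_def by (rule orth_isometry[OF orth_transpose[OF V] vc])
  have wF: "w = F0 *\<^sub>v v"
  proof -
    have "F0 *\<^sub>v v = (F0 * D) *\<^sub>v w" unfolding v_def using F0 D w(1) by simp
    thus ?thesis unfolding FD using w(1) by simp
  qed
  have up1: "vec_norm2 (C *\<^sub>v v) \<le> \<beta> * vec_norm2 w"
  proof -
    have Cc: "C \<in> carrier_mat r m" unfolding Cdef by (rule mult_carrier_mat[OF mult_carrier_mat[OF Uc Sc] Vtc])
    have "C *\<^sub>v v = (C * D) *\<^sub>v w" unfolding v_def using Cc D w(1) by simp
    moreover have "w \<in> carrier_vec (dim_col (C * D))" using w(1) D by simp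
    ultimately show ?thesis using bndD[OF bCD] by simp
  qed
  have up2: "vec_norm2 w \<le> f0 * vec_norm2 v"
    unfolding wF by (rule bndD[OF bF0]) (use F0 vc in simp)
  have vnz: "v \<noteq> 0\<^sub>v m"
  proof
    assume "v = 0\<^sub>v m"
    hence "w = 0\<^sub>v q" unfolding wF using F0 by simp
    thus False using w(2) by simp
  qed
  have vpos: "0 < vec_norm2 v" by (rule vn_pos[OF vc vnz])
  have "s p * vec_norm2 v \<le> \<beta> * (f0 * vec_norm2 v)"
  proof -
    have "s p * vec_norm2 v \<le> vec_norm2 (C *\<^sub>v v)" using low nCv nyv by simp
    also have "\<dots> \<le> \<beta> * vec_norm2 w" by (rule up1)
    also have "\<dots> \<le> \<beta> * (f0 * vec_norm2 v)" using up2 beta by (rule mult_left_mono)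
    finally show ?thesis .
  qed
  hence "s p * vec_norm2 v \<le> (\<beta> * f0) * vec_norm2 v" by (simp add: mult.assoc)
  thus ?thesis using vpos by simp
qed



lemma lower_sp:
  fixes C D F0 G C0 U V :: "real mat" and s :: "nat \<Rightarrow> real"
  assumes U: "orth_mat r U" and V: "orth_mat m V" and s0: "\<forall>i. 0 \<le> s i"
    and sdec: "\<forall>i j. i \<le> j \<longrightarrow> j < min r m \<longrightarrow> s j \<le> s i"
    and Cdef: "C = U * rect_diag r m s * transpose_mat V"
    and D: "D \<in> carrier_mat m q" and F0: "F0 \<in> carrier_mat q m"
    and G: "G \<in> carrier_mat m r" and C0: "C0 \<in> carrier_mat r m"
    and GCDF: "G * C0 + D * F0 = 1\<^sub>m m" and C0GC: "C0 * G * C = C0"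
    and bw: "bnd (G * C0 * G) w0" and w0: "0 \<le> w0"
    and p: "0 < p" and pr: "p < r" and pm: "p < m" and q: "q = m - p"
  shows "1 \<le> w0 * s (p - 1)"
proof -
  have Uc: "U \<in> carrier_mat r r" using U by (rule orth_carrier)
  have Vc: "V \<in> carrier_mat m m" using V by (rule orth_carrier)
  have Vtc: "transpose_mat V \<in> carrier_mat m m" using Vc by simp
  have Sc: "rect_diag r m s \<in> carrier_mat r m" by simp
  have Cc: "C \<in> carrier_mat r m" unfolding Cdef by (rule mult_carrier_mat[OF mult_carrier_mat[OF Uc Sc] Vtc])
  have m1: "m - 1 < m" using pm by simp
  define FV where "FV = F0 * V"
  have FVc: "FV \<in> carrier_mat q m" unfolding FV_def using F0 Vc by simp
  define N2 where "N2 = mat (m - 1) m (\<lambda>(i,j). if i < q then FV $$ (i,j) else (if j = i - q then 1 else 0))"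
  have N2c: "N2 \<in> carrier_mat (m - 1) m" unfolding N2_def by simp
  obtain y where y: "y \<in> carrier_vec m" "y \<noteq> 0\<^sub>v m" "N2 *\<^sub>v y = 0\<^sub>v (m - 1)"
    using wide_kernel[OF N2c m1] by blast
  have yk: "y $ k = 0" if k: "k < p - 1" for k
  proof -
    have k1: "q + k < m - 1" using k q pm by simp
    have rowN: "row N2 (q + k) = unit_vec m k"
      unfolding N2_def using k1 by (intro eq_vecI) auto
    have "y $ k = (N2 *\<^sub>v y) $ (q + k)" using k1 N2c rowN y(1) k pm by simp
    also have "\<dots> = 0" using y(3) k1 by simp
    finally show ?thesis .
  qed
  define v where "v = V *\<^sub>v y"
  have vc: "v \<in> carrier_vec m" unfolding v_def using Vc y(1) by simp
  have Fv: "F0 *\<^sub>v v = 0\<^sub>v q"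
  proof (rule eq_vecI)
    fix i assume "i < dim_vec (0\<^sub>v q :: real vec)"
    hence i: "i < q" by simp
    have i1: "i < m - 1" using i q p pm by simp
    have rowN: "row N2 i = row FV i" unfolding N2_def using i i1 FVc by (intro eq_vecI) auto
    have "(F0 *\<^sub>v v) $ i = (FV *\<^sub>v y) $ i" unfolding v_def FV_def using F0 Vc y(1) by simp
    also have "\<dots> = row FV i \<bullet> y" using i FVc by simp
    also have "\<dots> = (N2 *\<^sub>v y) $ i" using i1 N2c rowN by simp
    also have "\<dots> = 0" using y(3) i1 by simp
    finally show "(F0 *\<^sub>v v) $ i = 0\<^sub>v q $ i" using i by simp
  qed (use F0 in simp)
  have GC0c: "G * C0 \<in> carrier_mat m m" using G C0 by simp
  have DF0c: "D * F0 \<in> carrier_mat m m" using D F0 by simp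
  have vG: "v = G *\<^sub>v (C0 *\<^sub>v v)"
  proof -
    have "v = (G * C0 + D * F0) *\<^sub>v v" unfolding GCDF using vc by simp
    also have "\<dots> = (G * C0) *\<^sub>v v + (D * F0) *\<^sub>v v" by (rule add_mult_distrib_mat_vec[OF GC0c DF0c vc])
    also have "(D * F0) *\<^sub>v v = 0\<^sub>v m" using D F0 vc Fv by simp
    also have "(G * C0) *\<^sub>v v = G *\<^sub>v (C0 *\<^sub>v v)" using G C0 vc by simp
    finally show ?thesis using G C0 vc by simp
  qed
  have C0v: "C0 *\<^sub>v v = (C0 * G) *\<^sub>v (C *\<^sub>v v)"
  proof -
    have "C0 *\<^sub>v v = (C0 * G * C) *\<^sub>v v" unfolding C0GC ..
    also have "\<dots> = (C0 * G) *\<^sub>v (C *\<^sub>v v)" using C0 G Cc vc by (intro assoc_mult_mat_vec) auto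
    finally show ?thesis .
  qed
  have vGCG: "v = (G * C0 * G) *\<^sub>v (C *\<^sub>v v)"
  proof -
    have "(G * C0 * G) *\<^sub>v (C *\<^sub>v v) = (G * (C0 * G)) *\<^sub>v (C *\<^sub>v v)" using G C0 by simp
    also have "\<dots> = G *\<^sub>v ((C0 * G) *\<^sub>v (C *\<^sub>v v))" using G C0 Cc vc by (intro assoc_mult_mat_vec) auto
    finally show ?thesis using vG C0v by simp
  qed
  have Cv: "C *\<^sub>v v = U *\<^sub>v (rect_diag r m s *\<^sub>v y)"
  proof -
    have USc: "U * rect_diag r m s \<in> carrier_mat r m" using Uc Sc by simp
    have e1: "V \<in> carrier_mat m m" by (rule Vc)
    have "transpose_mat V *\<^sub>v v = y"
    proof -
      have "transpose_mat V *\<^sub>v v = (transpose_mat V * V) *\<^sub>v y" unfolding v_def using Vc y(1) by simp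
      thus ?thesis unfolding orth_tt[OF V] using y(1) by simp
    qed
    moreover have "C *\<^sub>v v = (U * rect_diag r m s) *\<^sub>v (transpose_mat V *\<^sub>v v)"
      unfolding Cdef by (rule assoc_mult_mat_vec[OF USc Vtc vc])
    ultimately show ?thesis using Uc Sc y(1) by simp
  qed
  have nCv: "vec_norm2 (C *\<^sub>v v) = vec_norm2 (rect_diag r m s *\<^sub>v y)"
    unfolding Cv by (rule orth_isometry[OF U mult_mat_vec_carrier[OF Sc y(1)]])
  have up: "vec_norm2 (rect_diag r m s *\<^sub>v y) \<le> s (p - 1) * vec_norm2 y"
  proof (rule rd_upper[OF y(1)])
    show "0 \<le> s (p - 1)" using s0 by simp
  next
    fix i assume ir: "i < r" and im: "i < m"
    show "(s i * y $ i)^2 \<le> (s (p - 1))^2 * (y $ i)^2"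
    proof (cases "i < p - 1")
      case True
      thus ?thesis using yk[OF True] by simp
    next
      case False
      hence "s i \<le> s (p - 1)" using sdec ir im by auto
      hence "(s i)^2 \<le> (s (p - 1))^2" using s0 by (intro power_mono) auto
      hence "(s i)^2 * (y $ i)^2 \<le> (s (p - 1))^2 * (y $ i)^2" by (intro mult_right_mono) auto
      thus ?thesis by (simp add: power_mult_distrib)
    qed
  qed
  have nvy: "vec_norm2 v = vec_norm2 y" unfolding v_def by (rule orth_isometry[OF V y(1)])
  have vpos: "0 < vec_norm2 v" using nvy vn_pos[OF y(1,2)] by simp
  have "vec_norm2 v \<le> w0 * vec_norm2 (C *\<^sub>v v)"
  proof -
    have "C *\<^sub>v v \<in> carrier_vec (dim_col (G * C0 * G))" using Cc vc G by simp
    from bndD[OF bw this] show ?thesis using vGCG by simp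
  qed
  also have "\<dots> \<le> w0 * (s (p - 1) * vec_norm2 v)" using nCv up nvy w0 by (simp add: mult_left_mono)
  finally have "1 * vec_norm2 v \<le> (w0 * s (p - 1)) * vec_norm2 v" by (simp add: mult.assoc)
  thus ?thesis using vpos by (simp only: mult_le_cancel_right)
qed



lemma assoc_dim: fixes A :: "real mat"
  shows "dim_col A = dim_row B \<Longrightarrow> dim_col B = dim_row C \<Longrightarrow> (A * B) * C = A * (B * C)"
proof -
  assume h: "dim_col A = dim_row B" "dim_col B = dim_row C"
  show ?thesis by (rule assoc_mult_mat[OF carrier_matI[OF refl refl] carrier_matI[OF h(1)[symmetric] refl]
     carrier_matI[OF h(2)[symmetric] refl]])
qed

lemma assoc_dim_vec: fixes A :: "real mat"
  shows "dim_col A = dim_row B \<Longrightarrow> dim_col B = dim_vec v \<Longrightarrow> (A * B) *\<^sub>v v = A *\<^sub>v (B *\<^sub>v v)"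
proof -
  assume h: "dim_col A = dim_row B" "dim_col B = dim_vec v"
  show ?thesis by (rule assoc_mult_mat_vec[OF carrier_matI[OF refl refl] carrier_matI[OF h(1)[symmetric] refl]
     carrier_vecI[OF h(2)[symmetric]]])
qed

lemma mat_ent: "X = Y \<Longrightarrow> X $$ (i,j) = Y $$ (i,j)" by simp

lemma gA: assumes "(X::real mat) \<in> carrier_mat a b" "Y \<in> carrier_mat a b" "X + Y = 0\<^sub>m a b"
  shows "Y = - X" "X = - Y"
proof -
  have e: "X $$ (i,j) + Y $$ (i,j) = 0" if "i < a" "j < b" for i j
    using mat_ent[OF assms(3), of i j] that assms(1,2) by simp
  show "Y = - X" by (rule eq_matI) (use e assms(1,2) in \<open>auto simp: eq_neg_iff_add_eq_0 add.commute\<close>)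
  show "X = - Y" by (rule eq_matI) (use e assms(1,2) in \<open>auto simp: eq_neg_iff_add_eq_0\<close>)
qed

lemma gB: assumes "(X::real mat) \<in> carrier_mat a b" "Y \<in> carrier_mat a b" "Z \<in> carrier_mat a b" "X + Y = Z"
  shows "X = Z + - Y" "Y = Z + - X"
proof -
  have e: "X $$ (i,j) + Y $$ (i,j) = Z $$ (i,j)" if "i < a" "j < b" for i j
    using mat_ent[OF assms(4), of i j] that assms(1,2) by simp
  show "X = Z + - Y" by (rule eq_matI) (use e assms(1-3) in \<open>auto simp: algebra_simps\<close>)
  show "Y = Z + - X" by (rule eq_matI) (use e assms(1-3) in \<open>auto simp: algebra_simps\<close>)
qed

lemma gC: assumes "(C::real mat) \<in> carrier_mat a b" "L \<in> carrier_mat a b" "T \<in> carrier_mat a b" "C = L + T"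
  shows "L - C = - T"
proof -
  have e: "C $$ (i,j) = L $$ (i,j) + T $$ (i,j)" if "i < a" "j < b" for i j
    using mat_ent[OF assms(4), of i j] that assms(2,3) by simp
  show ?thesis by (rule eq_matI) (use e assms(1-3) in auto)
qed

lemma gD: assumes "(C::real mat) \<in> carrier_mat a b" "L \<in> carrier_mat a b"
  shows "L = C + (L - C)"
  by (rule eq_matI) (use assms in auto)

lemma gE: assumes "(X::real mat) \<in> carrier_mat a b" "Y \<in> carrier_mat a b" "Z \<in> carrier_mat a b"
    "I \<in> carrier_mat a b" "X + Y = I"
  shows "(X + Z) + Y = I + Z"
proof -
  have e: "X $$ (i,j) + Y $$ (i,j) = I $$ (i,j)" if "i < a" "j < b" for i j
    using mat_ent[OF assms(5), of i j] that assms(1,2) by simp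
  show ?thesis by (rule eq_matI) (use e assms(1-4) in auto)
qed

lemma gF: assumes "(P::real mat) \<in> carrier_mat a b" "Q \<in> carrier_mat a b" "Z \<in> carrier_mat a b"
    "I \<in> carrier_mat a b" "P = I + - Q"
  shows "P - Z = I + (- Q + - Z)"
proof -
  have e: "P $$ (i,j) = I $$ (i,j) - Q $$ (i,j)" if "i < a" "j < b" for i j
    using mat_ent[OF assms(5), of i j] that assms(2,4) by simp
  show ?thesis by (rule eq_matI) (use e assms(1-4) in auto)
qed

lemma gG: assumes "(B::real mat) \<in> carrier_mat a b" shows "0\<^sub>m a b - (- B) = B"
  by (rule eq_matI) (use assms in auto)

lemma gH: assumes "(A::real mat) \<in> carrier_mat a b" "X \<in> carrier_mat a b" "Y \<in> carrier_mat a b"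
  shows "(A + - (X + - Y)) - Y = A - X"
  by (rule eq_matI) (use assms in auto)

lemma gI: assumes "(L::real mat) \<in> carrier_mat a b" shows "L - L = 0\<^sub>m a b"
  by (rule eq_matI) (use assms in auto)

lemma rd_add: "rect_diag r c f + rect_diag r c g = rect_diag r c (\<lambda>i. f i + g i)"
  by (rule eq_matI) auto

lemma rd_cong: assumes "\<And>i. i < r \<Longrightarrow> i < c \<Longrightarrow> f i = g i" shows "rect_diag r c f = rect_diag r c g"
  by (rule eq_matI) (use assms in auto)



lemma core:
  fixes A B G D E C H F L C0 F0 :: "real mat" and n m p q r :: nat
  assumes Ac: "A \<in> carrier_mat n r" and Bc: "B \<in> carrier_mat n q"
    and Gc: "G \<in> carrier_mat m r" and Dc: "D \<in> carrier_mat m q"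
    and Ec: "E \<in> carrier_mat r n" and Cc: "C \<in> carrier_mat r m"
    and Hc: "H \<in> carrier_mat q n" and Fc: "F \<in> carrier_mat q m"
    and C0c: "C0 \<in> carrier_mat r m" and F0c: "F0 \<in> carrier_mat q m"
    and n0: "0 < n" and p0: "0 < p" and q0: "0 < q" and rdef: "r = n + p" and mdef: "m = q + p"
    and C0D: "C0 * D = 0\<^sub>m r q" and F0D: "F0 * D = 1\<^sub>m q" and GCDF0: "G * C0 + D * F0 = 1\<^sub>m m"
    and AEBH: "A * E + B * H = 1\<^sub>m n" and ACBF: "A * C + B * F = 0\<^sub>m n m"
    and GEDH: "G * E + D * H = 0\<^sub>m m n" and GCDF: "G * C + D * F = 1\<^sub>m m"
    and EBCD: "E * B + C * D = 0\<^sub>m r q"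
    and bB: "bnd B b" and bE: "bnd E kE" and bF: "bnd F kF" and bH: "bnd H kH" and bG: "bnd G gG"
    and bF0: "bnd F0 f0" and bw: "bnd (G * C0 * G) w0"
    and nn: "0 \<le> b" "0 \<le> kE" "0 \<le> kF" "0 \<le> kH" "0 \<le> gG" "0 \<le> f0" "0 \<le> w0"
    and sm1: "b * kH + b * kF * w0 * kE \<le> 1/2" and sm2: "gG * (kE * b * f0) \<le> 1/2"
    and svd: "trunc_svd p C L"
  shows "invertible_mat (four_block_mat E L H F) \<and>
    (\<exists>At Gt Dt. At \<in> carrier_mat n r \<and> Gt \<in> carrier_mat m r \<and> Dt \<in> carrier_mat m q \<and>
       four_block_mat E L H F * four_block_mat At (0\<^sub>m n q) Gt Dt = 1\<^sub>m (n + m) \<and>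
       four_block_mat At (0\<^sub>m n q) Gt Dt * four_block_mat E L H F = 1\<^sub>m (n + m) \<and>
       B = A * (L - C) * Dt \<and> A - At = A * (L - C) * Gt)"
proof -
  have rq: "r + q = n + m" using rdef mdef by simp
  have pr: "p < r" and pm: "p < m" using rdef mdef n0 q0 by auto
  have dC: "dim_row C = r" "dim_col C = m" using Cc by auto
  obtain U V s where U: "orth_mat r U" and V: "orth_mat m V" and s0: "\<forall>i. 0 \<le> s i"
    and sdec: "\<forall>i j. i \<le> j \<longrightarrow> j < min r m \<longrightarrow> s j \<le> s i"
    and Cdef: "C = U * rect_diag r m s * transpose_mat V"
    and Ldef: "L = U * rect_diag r m (\<lambda>i. if i < p then s i else 0) * transpose_mat V"
    using svd unfolding trunc_svd_def dC by blast
  define S where "S = rect_diag r m s"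
  define Sp where "Sp = rect_diag r m (\<lambda>i. if i < p then s i else 0)"
  define St where "St = rect_diag r m (\<lambda>i. if i < p then 0 else s i)"
  define Ut where "Ut = transpose_mat U"
  define Vt where "Vt = transpose_mat V"
  have Uc: "U \<in> carrier_mat r r" using U by (rule orth_carrier)
  have Vc: "V \<in> carrier_mat m m" using V by (rule orth_carrier)
  have Vtc: "Vt \<in> carrier_mat m m" unfolding Vt_def using Vc by simp
  have Utc: "Ut \<in> carrier_mat r r" unfolding Ut_def using Uc by simp
  have UtU: "Ut * U = 1\<^sub>m r" unfolding Ut_def by (rule orth_tt[OF U])
  have VtV: "Vt * V = 1\<^sub>m m" unfolding Vt_def by (rule orth_tt[OF V])
  have bUt: "bnd Ut 1" unfolding Ut_def by (rule orth_bnd[OF orth_transpose[OF U]])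
  have bVt: "bnd Vt 1" unfolding Vt_def by (rule orth_bnd[OF orth_transpose[OF V]])
  note Cdef' = Cdef[folded Vt_def] and Ldef' = Ldef[folded Vt_def]
  have Sc: "S \<in> carrier_mat r m" "Sp \<in> carrier_mat r m" "St \<in> carrier_mat r m"
    unfolding S_def Sp_def St_def by simp_all
  have Lc: "L \<in> carrier_mat r m" unfolding Ldef' by (rule mult_carrier_mat[OF mult_carrier_mat[OF Uc rd_carrier] Vtc])
  define T where "T = U * St * Vt"
  have Tc: "T \<in> carrier_mat r m" unfolding T_def using Uc Sc Vtc by (intro mult_carrier_mat) auto
  have SSS: "S = Sp + St" unfolding S_def Sp_def St_def rd_add by (rule rd_cong) auto
  have CLT: "C = L + T"
  proof -
    have "C = U * (Sp + St) * Vt" unfolding Cdef' SSS[unfolded S_def] ..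
    also have "U * (Sp + St) = U * Sp + U * St" by (rule mult_add_distrib_mat[OF Uc Sc(2,3)])
    also have "(U * Sp + U * St) * Vt = U * Sp * Vt + U * St * Vt"
      by (rule add_mult_distrib_mat) (use Uc Sc Vtc in auto)
    finally show ?thesis unfolding T_def Ldef' Sp_def .
  qed
  define Dl where "Dl = L - C"
  have Dlc: "Dl \<in> carrier_mat r m" unfolding Dl_def by (rule minus_carrier_mat[OF Cc])
  have DlT: "Dl = - T" unfolding Dl_def by (rule gC[OF Cc Lc Tc CLT])
  have sps: "s i \<le> s p" if "p \<le> i" "i < r" "i < m" for i using sdec that by auto
  have bSt: "bnd St (s p)" unfolding St_def
    by (rule rd_bnd) (use s0 sps in auto)
  have bT: "bnd T (s p)"
  proof -
    have "bnd (U * St) (1 * s p)" by (rule bnd_mult[OF orth_bnd[OF U] bSt Uc Sc(3)]) simp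
    hence "bnd (U * St * Vt) (1 * s p * 1)"
      by (rule bnd_mult[OF _ bVt]) (use Uc Sc Vtc s0 in auto)
    thus ?thesis unfolding T_def by simp
  qed
  have bDl: "bnd Dl (s p)" unfolding DlT by (rule bnd_uminus[OF bT])
  have CD: "C * D = - (E * B)" by (rule gA(1)[OF _ _ EBCD]) (use Ec Bc Cc Dc in auto)
  have bCD: "bnd (C * D) (kE * b)" unfolding CD by (rule bnd_uminus[OF bnd_mult[OF bE bB Ec Bc nn(2)]])
  have sp_up: "s p \<le> kE * b * f0"
    by (rule upper_sp[OF U V s0 sdec Cdef Dc F0c F0D pr pm _ bCD bF0 nn(6)]) (use mdef nn in auto)
  have C0GC: "C0 * G * C = C0"
  proof -
    have "C0 = C0 * (G * C + D * F)" unfolding GCDF using C0c by simp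
    also have "\<dots> = C0 * (G * C) + C0 * (D * F)" by (rule mult_add_distrib_mat) (use C0c Gc Cc Dc Fc in auto)
    also have "C0 * (D * F) = (C0 * D) * F" using C0c Dc Fc by simp
    also have "\<dots> = 0\<^sub>m r m" unfolding C0D using Fc by simp
    also have "C0 * (G * C) = C0 * G * C" using C0c Gc Cc by simp
    finally show ?thesis using C0c Gc Cc by simp
  qed
  have slow: "1 \<le> w0 * s (p - 1)"
    by (rule lower_sp[OF U V s0 sdec Cdef Dc F0c Gc C0c GCDF0 C0GC bw nn(7) p0 pr pm]) (use mdef in auto)
  have w0pos: "0 < w0" using slow nn(7) s0 by (cases "w0 = 0") auto
  have spos: "1 / w0 \<le> s i" "0 < s i" if "i < p" for i
  proof -
    have "s (p - 1) \<le> s i" by (rule sdec[rule_format]) (use that pr pm in auto)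
    hence "1 \<le> w0 * s i" using slow w0pos by (smt (verit) mult_left_mono)
    thus "1 / w0 \<le> s i" using w0pos by (simp add: field_simps)
    thus "0 < s i" using w0pos by (smt (verit) divide_pos_pos)
  qed
  have GDlc: "G * Dl \<in> carrier_mat m m" using Gc Dlc by simp
  have "bnd (G * Dl) (gG * s p)" by (rule bnd_mult[OF bG bDl Gc Dlc nn(5)])
  moreover have "gG * s p \<le> 1/2" using mult_left_mono[OF sp_up nn(5)] sm2 by simp
  ultimately have bGDl: "bnd (G * Dl) (1/2)" by (rule bnd_mono)
  obtain W' where W'c: "W' \<in> carrier_mat m m" and W1: "(1\<^sub>m m + G * Dl) * W' = 1\<^sub>m m"
    and W2: "W' * (1\<^sub>m m + G * Dl) = 1\<^sub>m m"
    using inv_near_one[OF GDlc bGDl] by auto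
  have GCc: "G * C \<in> carrier_mat m m" using Gc Cc by simp
  have DFc: "D * F \<in> carrier_mat m m" using Dc Fc by simp
  have GLDF: "G * L + D * F = 1\<^sub>m m + G * Dl"
  proof -
    have "L = C + Dl" unfolding Dl_def by (rule gD[OF Cc Lc])
    hence "G * L = G * C + G * Dl" using mult_add_distrib_mat[OF Gc Cc Dlc] by simp
    thus ?thesis using gE[OF GCc DFc GDlc one_carrier_mat GCDF] by simp
  qed
  define Pi where "Pi = rect_diag r r (\<lambda>i. if i < p then 1 else 0)"
  define R where "R = U * Pi * Ut"
  define Sg where "Sg = rect_diag m r (\<lambda>i. if i < p then 1 / s i else 0)"
  have Pic: "Pi \<in> carrier_mat r r" and Sgc: "Sg \<in> carrier_mat m r" unfolding Pi_def Sg_def by simp_all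
  have Rc: "R \<in> carrier_mat r r" unfolding R_def using Uc Pic Utc by simp
  have snz: "s i \<noteq> 0" if "i < p" for i using spos(2)[OF that] by simp
  have SSg: "S * Sg = Pi" unfolding S_def Sg_def Pi_def rd_mult
    by (rule rd_cong) (use snz pm in \<open>auto\<close>)
  have CV: "C * V = U * S"
  proof -
    have USc: "U * S \<in> carrier_mat r m" using Uc Sc by (simp add: assoc_dim)
    have "C * V = (U * S) * (Vt * V)" unfolding Cdef' S_def[symmetric] by (rule assoc_mult_mat[OF USc Vtc Vc])
    also have "\<dots> = U * S" unfolding VtV using Uc Sc by (simp add: assoc_dim)
    finally show ?thesis .
  qed
  have AC: "A * C = - (B * F)" by (rule gA(2)[OF _ _ ACBF]) (use Ac Cc Bc Fc in auto)
  have AUS: "A * (U * S) = - (B * (F * V))"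
  proof -
    have "A * (U * S) = (A * C) * V" unfolding CV[symmetric] using Ac Cc Vc by (simp add: assoc_dim)
    also have "\<dots> = - (B * (F * V))" unfolding AC using Bc Fc Vc by (simp add: assoc_dim)
    finally show ?thesis .
  qed
  have AR: "A * R = - (B * (F * (V * (Sg * Ut))))"
  proof -
    have "A * R = (A * (U * S)) * (Sg * Ut)"
      unfolding R_def SSg[symmetric] using Ac Uc Sc Sgc Utc by (simp add: assoc_dim)
    also have "\<dots> = - (B * (F * (V * (Sg * Ut))))" unfolding AUS using Bc Fc Vc Sgc Utc by (simp add: assoc_dim)
    finally show ?thesis .
  qed
  have bSg: "bnd Sg w0" unfolding Sg_def
  proof (rule rd_bnd[OF nn(7)])
    fix i assume "i < m" "i < r"
    show "\<bar>if i < p then 1 / s i else 0\<bar> \<le> w0"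
    proof (cases "i < p")
      case True
      have "1 \<le> w0 * s i" using spos(1)[OF True] w0pos by (simp add: field_simps)
      thus ?thesis using True spos(2)[OF True] by (simp add: field_simps)
    qed (use nn in simp)
  qed
  have bAR: "bnd (A * R) (b * (kF * (1 * (w0 * 1))))"
  proof -
    have "bnd (Sg * Ut) (w0 * 1)" by (rule bnd_mult[OF bSg bUt Sgc Utc nn(7)])
    hence "bnd (V * (Sg * Ut)) (1 * (w0 * 1))" by (intro bnd_mult[OF orth_bnd[OF V]]) (use Vc Sgc Utc in auto)
    hence "bnd (F * (V * (Sg * Ut))) (kF * (1 * (w0 * 1)))" by (intro bnd_mult[OF bF]) (use Fc Vc Sgc Utc nn in auto)
    hence "bnd (B * (F * (V * (Sg * Ut)))) (b * (kF * (1 * (w0 * 1))))" by (intro bnd_mult[OF bB]) (use Bc Fc Vc Sgc Utc nn in auto)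
    thus ?thesis unfolding AR by (rule bnd_uminus)
  qed
  have ARc: "A * R \<in> carrier_mat n r" using Ac Rc by (simp add: assoc_dim)
  have AREc: "A * R * E \<in> carrier_mat n n" using ARc Ec by (simp add: assoc_dim)
  have BHc: "B * H \<in> carrier_mat n n" using Bc Hc by (simp add: assoc_dim)
  have AEc: "A * E \<in> carrier_mat n n" using Ac Ec by (simp add: assoc_dim)
  define Xs where "Xs = - (B * H) + - (A * R * E)"
  have Xsc: "Xs \<in> carrier_mat n n" unfolding Xs_def using BHc AREc by (simp add: assoc_dim)
  have "bnd Xs (b * kH + b * (kF * (1 * (w0 * 1))) * kE)" unfolding Xs_def
    by (rule bnd_add[OF bnd_uminus[OF bnd_mult[OF bB bH Bc Hc nn(1)]] bnd_uminus[OF bnd_mult[OF bAR bE ARc Ec]]])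
      (use BHc AREc nn in \<open>auto intro: mult_nonneg_nonneg\<close>)
  moreover have "b * kH + b * (kF * (1 * (w0 * 1))) * kE \<le> 1/2" using sm1 by (simp add: mult.assoc)
  ultimately have bXs: "bnd Xs (1/2)" by (rule bnd_mono)
  obtain Zi where Zic: "Zi \<in> carrier_mat n n" and Z1: "(1\<^sub>m n + Xs) * Zi = 1\<^sub>m n"
    and Z2: "Zi * (1\<^sub>m n + Xs) = 1\<^sub>m n"
    using inv_near_one[OF Xsc bXs] by auto
  have A1R: "A * (1\<^sub>m r - R) = A - A * R"
    using mult_minus_distrib_mat[OF Ac one_carrier_mat Rc] Ac by (simp add: assoc_dim)
  have A1Rc: "A * (1\<^sub>m r - R) \<in> carrier_mat n r" using Ac Rc by (intro mult_carrier_mat minus_carrier_mat) auto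
  have Zm: "A * (1\<^sub>m r - R) * E = 1\<^sub>m n + Xs"
  proof -
    have "A * (1\<^sub>m r - R) * E = A * E - A * R * E" unfolding A1R by (rule minus_mult_distrib_mat[OF Ac ARc Ec])
    also have "\<dots> = 1\<^sub>m n + Xs" unfolding Xs_def
      by (rule gF[OF AEc BHc AREc one_carrier_mat gB(1)[OF AEc BHc one_carrier_mat AEBH]])
    finally show ?thesis .
  qed
  define X1 where "X1 = Zi * (A * (1\<^sub>m r - R))"
  have X1c: "X1 \<in> carrier_mat n r" unfolding X1_def using Zic A1Rc by (simp add: assoc_dim)
  have X1E: "X1 * E = 1\<^sub>m n"
  proof -
    have "X1 * E = Zi * (A * (1\<^sub>m r - R) * E)" unfolding X1_def using Zic A1Rc Ec by (simp add: assoc_dim)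
    thus ?thesis unfolding Zm Z2 .
  qed
  have PiSp: "Pi * Sp = Sp" unfolding Pi_def Sp_def rd_mult by (rule rd_cong) auto
  have RL: "R * L = L"
  proof -
    have "R * L = U * (Pi * ((Ut * U) * (Sp * Vt)))"
      unfolding R_def Ldef' Sp_def[symmetric] using Uc Pic Utc Sc Vtc by (simp add: assoc_dim)
    also have "\<dots> = U * ((Pi * Sp) * Vt)" unfolding UtU using Sc Vtc Pic by (simp add: assoc_dim)
    also have "\<dots> = L" unfolding PiSp Ldef' Sp_def[symmetric] using Uc Sc Vtc by (simp add: assoc_dim)
    finally show ?thesis .
  qed
  have X1L: "X1 * L = 0\<^sub>m n m"
  proof -
    have "(1\<^sub>m r - R) * L = 0\<^sub>m r m"
      using minus_mult_distrib_mat[OF one_carrier_mat Rc Lc] RL gI[OF Lc] Lc by (simp add: assoc_dim)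
    moreover have "X1 * L = Zi * (A * ((1\<^sub>m r - R) * L))" unfolding X1_def using Zic Ac Rc Lc
      by (simp add: assoc_dim)
    ultimately show ?thesis using Zic Ac by (simp add: assoc_dim)
  qed
  define Gt where "Gt = W' * G"
  define Dt where "Dt = W' * D"
  have Gtc: "Gt \<in> carrier_mat m r" unfolding Gt_def using W'c Gc by simp
  have Dtc: "Dt \<in> carrier_mat m q" unfolding Dt_def using W'c Dc by simp
  define J where "J = four_block_mat E L H F"
  define Wm where "Wm = four_block_mat X1 (0\<^sub>m n q) Gt Dt"
  have Jc: "J \<in> carrier_mat (n + m) (n + m)" unfolding J_def rq[symmetric]
    using four_block_carrier_mat[OF Ec Fc] rq by simp
  have Wmc: "Wm \<in> carrier_mat (n + m) (n + m)" unfolding Wm_def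
    using four_block_carrier_mat[OF X1c Dtc] rq by simp
  have GEc: "G * E \<in> carrier_mat m n" using Gc Ec by simp
  have DHc: "D * H \<in> carrier_mat m n" using Dc Hc by simp
  have GLc: "G * L \<in> carrier_mat m m" using Gc Lc by simp
  have b3: "Gt * E + Dt * H = 0\<^sub>m m n"
  proof -
    have "Gt * E + Dt * H = W' * (G * E) + W' * (D * H)" unfolding Gt_def Dt_def
      using W'c Gc Ec Dc Hc by (simp add: assoc_dim)
    also have "\<dots> = W' * (G * E + D * H)" by (rule mult_add_distrib_mat[OF W'c GEc DHc, symmetric])
    also have "\<dots> = 0\<^sub>m m n" unfolding GEDH using W'c by simp
    finally show ?thesis .
  qed
  have b4: "Gt * L + Dt * F = 1\<^sub>m m"
  proof -
    have "Gt * L + Dt * F = W' * (G * L) + W' * (D * F)" unfolding Gt_def Dt_def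
      using W'c Gc Lc Dc Fc by (simp add: assoc_dim)
    also have "\<dots> = W' * (G * L + D * F)" by (rule mult_add_distrib_mat[OF W'c GLc DFc, symmetric])
    also have "\<dots> = 1\<^sub>m m" unfolding GLDF W2 ..
    finally show ?thesis .
  qed
  have WJ: "Wm * J = 1\<^sub>m (n + m)"
  proof -
    have "Wm * J = four_block_mat (X1 * E + 0\<^sub>m n q * H) (X1 * L + 0\<^sub>m n q * F)
        (Gt * E + Dt * H) (Gt * L + Dt * F)"
      unfolding Wm_def J_def by (rule mult_four_block_mat[OF X1c zero_carrier_mat Gtc Dtc Ec Lc Hc Fc])
    also have "X1 * E + 0\<^sub>m n q * H = 1\<^sub>m n" unfolding X1E using Hc by simp
    also have "X1 * L + 0\<^sub>m n q * F = 0\<^sub>m n m" unfolding X1L using Fc by simp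
    finally show ?thesis unfolding b3 b4 by simp
  qed
  have JW: "J * Wm = 1\<^sub>m (n + m)" by (rule mat_mult_left_right_inverse[OF Wmc Jc WJ])
  have invJ: "invertible_mat J"
    unfolding invertible_mat_def inverts_mat_def square_mat.simps using Jc Wmc JW WJ by auto
  have JWb: "four_block_mat (E * X1 + L * Gt) (E * 0\<^sub>m n q + L * Dt) (H * X1 + F * Gt) (H * 0\<^sub>m n q + F * Dt)
      = four_block_mat (1\<^sub>m r) (0\<^sub>m r q) (0\<^sub>m q r) (1\<^sub>m q)"
  proof -
    have "J * Wm = four_block_mat (E * X1 + L * Gt) (E * 0\<^sub>m n q + L * Dt) (H * X1 + F * Gt) (H * 0\<^sub>m n q + F * Dt)"
      unfolding Wm_def J_def by (rule mult_four_block_mat[OF Ec Lc Hc Fc X1c zero_carrier_mat Gtc Dtc])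
    thus ?thesis using JW rq four_block_one_mat[of r q] by simp
  qed
  have EX1c: "E * X1 \<in> carrier_mat r r" using Ec X1c by simp
  have LGtc: "L * Gt \<in> carrier_mat r r" using Lc Gtc by simp
  have HX1c: "H * X1 \<in> carrier_mat q r" using Hc X1c by simp
  have FGtc: "F * Gt \<in> carrier_mat q r" using Fc Gtc by simp
  have LDtc: "L * Dt \<in> carrier_mat r q" using Lc Dtc by simp
  have FDtc: "F * Dt \<in> carrier_mat q q" using Fc Dtc by simp
  have e0c: "E * 0\<^sub>m n q + L * Dt \<in> carrier_mat r q" using LDtc by simp
  have h0c: "H * 0\<^sub>m n q + F * Dt \<in> carrier_mat q q" using FDtc by simp
  note blocks = four_block_eq[OF add_carrier_mat[OF LGtc] e0c add_carrier_mat[OF FGtc] h0c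
      one_carrier_mat zero_carrier_mat zero_carrier_mat one_carrier_mat JWb]
  have eq1: "E * X1 + L * Gt = 1\<^sub>m r" by (rule blocks(1))
  have LDt: "L * Dt = 0\<^sub>m r q" using blocks(2) Ec LDtc by simp
  have eq3: "H * X1 + F * Gt = 0\<^sub>m q r" by (rule blocks(3))
  have FDt: "F * Dt = 1\<^sub>m q" using blocks(4) Hc FDtc by simp
  have ALc: "A * L \<in> carrier_mat n m" using Ac Lc by simp
  have ACc: "A * C \<in> carrier_mat n m" using Ac Cc by simp
  have ALC: "A * (L - C) = A * L - A * C" by (rule mult_minus_distrib_mat[OF Ac Lc Cc])
  have fin1: "B = A * (L - C) * Dt"
  proof -
    have "A * (L - C) * Dt = A * L * Dt - A * C * Dt" unfolding ALC by (rule minus_mult_distrib_mat[OF ALc ACc Dtc])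
    also have "A * L * Dt = 0\<^sub>m n q" using Ac Lc Dtc LDt by (simp add: assoc_dim)
    also have "A * C * Dt = - B" unfolding AC using Bc Fc Dtc FDt by (simp add: assoc_dim)
    also have "0\<^sub>m n q - - B = B" by (rule gG[OF Bc])
    finally show ?thesis by simp
  qed
  have fin2: "A - X1 = A * (L - C) * Gt"
  proof -
    have HX1: "B * (H * X1) \<in> carrier_mat n r" using Bc HX1c by simp
    have LGt: "L * Gt = 1\<^sub>m r + - (E * X1)" by (rule gB(2)[OF EX1c LGtc one_carrier_mat eq1])
    have FGt: "F * Gt = - (H * X1)" by (rule gA(1)[OF HX1c FGtc eq3])
    have AE: "A * E = 1\<^sub>m n + - (B * H)" by (rule gB(1)[OF AEc BHc one_carrier_mat AEBH])
    have "A * (L - C) * Gt = A * L * Gt - A * C * Gt" unfolding ALC by (rule minus_mult_distrib_mat[OF ALc ACc Gtc])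
    also have "A * L * Gt = A + - (X1 + - (B * (H * X1)))"
    proof -
      have "A * L * Gt = A * (1\<^sub>m r + - (E * X1))" using Ac Lc Gtc LGt by (simp add: assoc_dim)
      also have "\<dots> = A + - ((A * E) * X1)"
        using mult_add_distrib_mat[OF Ac one_carrier_mat uminus_carrier_mat[OF EX1c]] Ac Ec X1c
        by (simp add: assoc_dim)
      also have "(A * E) * X1 = X1 + - (B * (H * X1))" unfolding AE
        using add_mult_distrib_mat[OF one_carrier_mat uminus_carrier_mat[OF BHc] X1c] Bc Hc X1c
        by (simp add: assoc_dim)
      finally show ?thesis .
    qed
    also have "A * C * Gt = B * (H * X1)"
    proof -
      have "A * C * Gt = - (B * (F * Gt))" unfolding AC using Bc Fc Gtc by (simp add: assoc_dim)
      also have "B * (F * Gt) = - (B * (H * X1))" unfolding FGt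
        by (rule uminus_mult_right_mat) (use Bc Hc in simp)
      also have "- (- (B * (H * X1))) = B * (H * X1)" by (rule eq_matI) (use HX1 in auto)
      finally show ?thesis .
    qed
    also have "(A + - (X1 + - (B * (H * X1)))) - B * (H * X1) = A - X1" by (rule gH[OF Ac X1c HX1])
    finally show ?thesis by simp
  qed
  show ?thesis
    using invJ JW WJ fin1 fin2 X1c Gtc Dtc unfolding J_def Wm_def by blast
qed



lemma spec_entry: assumes B: "B \<in> carrier_mat a c" and i: "i < a" and j: "j < c"
  shows "\<bar>B $$ (i,j)\<bar> \<le> spec_norm B"
proof -
  obtain k where k: "0 \<le> k" "bnd B k" using bnd_exists by blast
  define e where "e = (unit_vec c j :: real vec)"
  have ec: "e \<in> carrier_vec (dim_col B)" unfolding e_def using B by simp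
  have ne: "vec_norm2 e = 1" unfolding e_def by (rule vn_unit[OF j])
  have mem: "vec_norm2 (B *\<^sub>v e) \<in> {vec_norm2 (B *\<^sub>v v) | v. v \<in> carrier_vec (dim_col B) \<and> vec_norm2 v \<le> 1}"
    using ec ne by auto
  have bdd: "bdd_above {vec_norm2 (B *\<^sub>v v) | v. v \<in> carrier_vec (dim_col B) \<and> vec_norm2 v \<le> 1}"
  proof (rule bdd_aboveI)
    fix x assume "x \<in> {vec_norm2 (B *\<^sub>v v) | v. v \<in> carrier_vec (dim_col B) \<and> vec_norm2 v \<le> 1}"
    then obtain v where v: "x = vec_norm2 (B *\<^sub>v v)" "v \<in> carrier_vec (dim_col B)" "vec_norm2 v \<le> 1" by auto
    have "x \<le> k * vec_norm2 v" using bndD[OF k(2) v(2)] v(1) by simp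
    also have "\<dots> \<le> k * 1" using v(3) k(1) by (intro mult_left_mono) auto
    finally show "x \<le> k" by simp
  qed
  have "vec_norm2 (B *\<^sub>v e) \<le> spec_norm B" unfolding spec_norm_def by (rule cSup_upper[OF mem bdd])
  moreover have "(B *\<^sub>v e) $ i = B $$ (i,j)" unfolding e_def using B i j by simp
  moreover have "\<bar>(B *\<^sub>v e) $ i\<bar> \<le> vec_norm2 (B *\<^sub>v e)" by (rule vn_comp) (use B i in simp)
  ultimately show ?thesis by simp
qed

lemma frac_le: assumes "0 \<le> (x::real)" "x \<le> Q" "0 < Q" shows "x * (1 / (2 * Q)) \<le> 1/2"
  using assms by (simp add: field_simps)



theorem mainTheorem3:
  fixes M n p :: nat and A G D :: "real mat"
  assumes "0 < M" "0 < n" "0 < p" "n + p < M"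
    and "A \<in> carrier_mat n (n + p)"
    and "G \<in> carrier_mat (M - n) (n + p)"
    and "D \<in> carrier_mat (M - n) (M - n - p)"
    and "invertible_mat (four_block_mat A (0\<^sub>m n (M - n - p)) G D)"
  shows "\<exists>\<epsilon>0 > 0. \<forall>B \<in> carrier_mat n (M - n - p). spec_norm B \<le> \<epsilon>0 \<longrightarrow>
           invertible_mat (four_block_mat A B G D) \<and>
           (\<forall>E C H F L.
              E \<in> carrier_mat (n + p) n \<longrightarrow> C \<in> carrier_mat (n + p) (M - n) \<longrightarrow>
              H \<in> carrier_mat (M - n - p) n \<longrightarrow> F \<in> carrier_mat (M - n - p) (M - n) \<longrightarrow>
              four_block_mat A B G D * four_block_mat E C H F = 1\<^sub>m M \<longrightarrow>
              trunc_svd p C L \<longrightarrow>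
              invertible_mat (four_block_mat E L H F) \<and>
              (\<exists>At Gt Dt. At \<in> carrier_mat n (n + p) \<and> Gt \<in> carrier_mat (M - n) (n + p) \<and>
                 Dt \<in> carrier_mat (M - n) (M - n - p) \<and>
                 four_block_mat E L H F * four_block_mat At (0\<^sub>m n (M - n - p)) Gt Dt = 1\<^sub>m M \<and>
                 four_block_mat At (0\<^sub>m n (M - n - p)) Gt Dt * four_block_mat E L H F = 1\<^sub>m M \<and>
                 B = A * (L - C) * Dt \<and>
                 A - At = A * (L - C) * Gt))"
proof -
  note n0 = assms(2) and p0 = assms(3) and nM = assms(4) and Ac = assms(5) and Gc = assms(6) and Dc = assms(7)
  define r where "r = n + p"
  define m where "m = M - n"
  define q where "q = M - n - p"
  have q0: "0 < q" unfolding q_def using nM by simp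
  have mq: "m = q + p" unfolding m_def q_def using nM by simp
  have Mnm: "M = n + m" unfolding m_def using nM by simp
  have Mrq: "M = r + q" unfolding r_def q_def using nM by simp
  note Ac' = Ac[folded r_def] and Gc' = Gc[folded r_def m_def] and Dc' = Dc[folded m_def q_def]
  define K0 where "K0 = four_block_mat A (0\<^sub>m n q) G D"
  have K0c: "K0 \<in> carrier_mat M M" unfolding K0_def using four_block_carrier_mat[OF Ac' Dc'] Mnm Mrq by simp
  have invK0: "invertible_mat K0" unfolding K0_def q_def by (rule assms(8))
  then obtain K0i where K01': "K0 * K0i = 1\<^sub>m (dim_row K0)" and K02: "K0i * K0 = 1\<^sub>m (dim_row K0i)"
    unfolding invertible_mat_def inverts_mat_def by blast
  have K01: "K0 * K0i = 1\<^sub>m M" using K01' K0c by simp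
  have K0ic: "K0i \<in> carrier_mat M M"
  proof -
    have "dim_col K0i = M" using arg_cong[OF K01, of dim_col] by simp
    moreover have "dim_row K0i = M" using arg_cong[OF K02, of dim_col] K0c by simp
    ultimately show ?thesis by auto
  qed
  have K02': "K0i * K0 = 1\<^sub>m M" using K02 K0ic by simp
  obtain E0 C0 H0 F0 where sb: "split_block K0i r n = (E0, C0, H0, F0)" by (metis prod_cases4)
  note spl = split_block[OF sb, of q m]
  have dK: "dim_row K0i = r + q" "dim_col K0i = n + m" using K0ic Mnm Mrq by auto
  note spl = spl[OF dK]
  have E0c: "E0 \<in> carrier_mat r n" and C0c: "C0 \<in> carrier_mat r m" and H0c: "H0 \<in> carrier_mat q n"
    and F0c: "F0 \<in> carrier_mat q m" and K0iB: "K0i = four_block_mat E0 C0 H0 F0" using spl by auto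
  have b1: "four_block_mat (E0 * A + C0 * G) (E0 * 0\<^sub>m n q + C0 * D) (H0 * A + F0 * G) (H0 * 0\<^sub>m n q + F0 * D)
      = four_block_mat (1\<^sub>m r) (0\<^sub>m r q) (0\<^sub>m q r) (1\<^sub>m q)"
    using K02' unfolding K0iB K0_def mult_four_block_mat[OF E0c C0c H0c F0c Ac' zero_carrier_mat Gc' Dc']
    using Mrq by simp
  have cb1: "E0 * A + C0 * G \<in> carrier_mat r r" "E0 * 0\<^sub>m n q + C0 * D \<in> carrier_mat r q"
    "H0 * A + F0 * G \<in> carrier_mat q r" "H0 * 0\<^sub>m n q + F0 * D \<in> carrier_mat q q"
    by (intro carrier_matI; use E0c C0c H0c F0c Ac' Gc' Dc' in simp)+
  note bl1 = four_block_eq[OF cb1 one_carrier_mat zero_carrier_mat zero_carrier_mat one_carrier_mat b1]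
  have C0D: "C0 * D = 0\<^sub>m r q" using bl1(2) E0c C0c Dc' by simp
  have F0D: "F0 * D = 1\<^sub>m q" using bl1(4) H0c F0c Dc' by simp
  have b2: "four_block_mat (A * E0 + 0\<^sub>m n q * H0) (A * C0 + 0\<^sub>m n q * F0) (G * E0 + D * H0) (G * C0 + D * F0)
      = four_block_mat (1\<^sub>m n) (0\<^sub>m n m) (0\<^sub>m m n) (1\<^sub>m m)"
    using K01 unfolding K0iB K0_def mult_four_block_mat[OF Ac' zero_carrier_mat Gc' Dc' E0c C0c H0c F0c]
    using Mnm by simp
  have cb2: "A * E0 + 0\<^sub>m n q * H0 \<in> carrier_mat n n" "A * C0 + 0\<^sub>m n q * F0 \<in> carrier_mat n m"
    "G * E0 + D * H0 \<in> carrier_mat m n" "G * C0 + D * F0 \<in> carrier_mat m m"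
    by (intro carrier_matI; use E0c C0c H0c F0c Ac' Gc' Dc' in simp)+
  note bl2 = four_block_eq[OF cb2 one_carrier_mat zero_carrier_mat zero_carrier_mat one_carrier_mat b2]
  have GCDF0: "G * C0 + D * F0 = 1\<^sub>m m" using bl2(4) Gc' C0c Dc' F0c by simp
  obtain c0 where c0: "0 \<le> c0" "bnd K0i c0" using bnd_exists by blast
  obtain gG where gG: "0 \<le> gG" "bnd G gG" using bnd_exists by blast
  obtain f0 where f0: "0 \<le> f0" "bnd F0 f0" using bnd_exists by blast
  obtain w0 where w0: "0 \<le> w0" "bnd (G * C0 * G) w0" using bnd_exists by blast
  define kE where "kE = real r * real n * (2 * c0)"
  define kF where "kF = real q * real m * (2 * c0)"
  define kH where "kH = real q * real n * (2 * c0)"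
  have kn: "0 \<le> kE" "0 \<le> kF" "0 \<le> kH" unfolding kE_def kF_def kH_def using c0 by simp_all
  define Q where "Q = 1 + c0 * (real M * real M) + real n * real q * (kH + kF * w0 * kE + gG * kE * f0)"
  have t1: "0 \<le> c0 * (real M * real M)" using c0 by simp
  have t2: "0 \<le> real n * real q * (kH + kF * w0 * kE + gG * kE * f0)" using kn w0 gG f0 by simp
  have Q0: "0 < Q" unfolding Q_def using t1 t2 by simp
  have Q1: "c0 * (real M * real M) \<le> Q" unfolding Q_def using t2 by simp
  have Q2: "real n * real q * (kH + kF * w0 * kE) \<le> Q"
  proof -
    have "real n * real q * (kH + kF * w0 * kE) \<le> real n * real q * (kH + kF * w0 * kE + gG * kE * f0)"
      using kn gG f0 by (intro mult_left_mono) auto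
    thus ?thesis unfolding Q_def using t1 by simp
  qed
  have Q3: "real n * real q * (gG * kE * f0) \<le> Q"
  proof -
    have "real n * real q * (gG * kE * f0) \<le> real n * real q * (kH + kF * w0 * kE + gG * kE * f0)"
      using kn gG f0 w0 by (intro mult_left_mono) auto
    thus ?thesis unfolding Q_def using t1 by simp
  qed
  define \<epsilon> where "\<epsilon> = 1 / (2 * Q)"
  have eps0: "0 < \<epsilon>" unfolding \<epsilon>_def using Q0 by simp
  show ?thesis
    apply (rule exI[of _ \<epsilon>])
    apply (rule conjI)
    subgoal by (rule eps0)
    apply (intro ballI impI)
    subgoal premises prems for B
    proof -
      have Bc: "B \<in> carrier_mat n q" unfolding q_def using prems(1) .
      have sB: "spec_norm B \<le> \<epsilon>" using prems(2) .
      define b where "b = real n * real q * \<epsilon>"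
      have bB: "bnd B b" unfolding b_def
        by (rule bnd_entries[OF Bc]) (use spec_entry[OF Bc] sB in force)
      have b0: "0 \<le> b" unfolding b_def using eps0 by simp
      define Z where "Z = four_block_mat (0\<^sub>m n r) B (0\<^sub>m m r) (0\<^sub>m m q)"
      have Zc: "Z \<in> carrier_mat M M" unfolding Z_def
        by (rule carrier_matI) (use Mnm Mrq in simp)+
      have bZ: "bnd Z (real M * real M * \<epsilon>)"
      proof (rule bnd_entries[OF Zc])
        fix i j assume i: "i < M" and j: "j < M"
        show "\<bar>Z $$ (i,j)\<bar> \<le> \<epsilon>"
        proof (cases "i < n \<and> \<not> j < r")
          case True
          hence "Z $$ (i,j) = B $$ (i, j - r)" unfolding Z_def using i j Bc Mnm Mrq by simp
          moreover have "\<bar>B $$ (i, j - r)\<bar> \<le> \<epsilon>"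
          proof -
            have "j - r < q" using True j Mrq by arith
            thus ?thesis using spec_entry[OF Bc, of i "j - r"] sB True by simp
          qed
          ultimately show ?thesis by simp
        next
          case False
          hence "Z $$ (i,j) = 0" unfolding Z_def using i j Bc Mnm Mrq by auto
          thus ?thesis using eps0 by simp
        qed
      qed
      define K where "K = four_block_mat A B G D"
      have KZ: "K = K0 + Z" unfolding K_def K0_def Z_def
        using add_four_block_mat[OF Ac' zero_carrier_mat Gc' Dc' zero_carrier_mat Bc zero_carrier_mat zero_carrier_mat]
          Ac' Gc' Dc' Bc by simp
      have Kc: "K \<in> carrier_mat M M" unfolding KZ using Zc by simp
      define N where "N = K0i * Z"
      have Nc: "N \<in> carrier_mat M M" unfolding N_def using K0ic Zc by simp
      have "bnd N (c0 * (real M * real M * \<epsilon>))" unfolding N_def by (rule bnd_mult[OF c0(2) bZ K0ic Zc c0(1)])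
      moreover have "c0 * (real M * real M * \<epsilon>) \<le> 1/2"
        using frac_le[OF t1 Q1 Q0] unfolding \<epsilon>_def by (simp add: mult.assoc)
      ultimately have bN: "bnd N (1/2)" by (rule bnd_mono)
      obtain Ni where Nic: "Ni \<in> carrier_mat M M" and N1: "(1\<^sub>m M + N) * Ni = 1\<^sub>m M"
        and N2: "Ni * (1\<^sub>m M + N) = 1\<^sub>m M" and bNi: "bnd Ni 2"
        using inv_near_one[OF Nc bN] by auto
      have K0N: "K0 * (1\<^sub>m M + N) = K"
      proof -
        have "K0 * (1\<^sub>m M + N) = K0 * 1\<^sub>m M + K0 * N" by (rule mult_add_distrib_mat[OF K0c one_carrier_mat Nc])
        also have "K0 * N = (K0 * K0i) * Z" unfolding N_def using K0c K0ic Zc by (simp add: assoc_dim)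
        finally show ?thesis unfolding K01 KZ using K0c Zc by simp
      qed
      define Kinv where "Kinv = Ni * K0i"
      have Kinvc: "Kinv \<in> carrier_mat M M" unfolding Kinv_def using Nic K0ic by simp
      have KKi: "K * Kinv = 1\<^sub>m M"
      proof -
        have "K * Kinv = K0 * (((1\<^sub>m M + N) * Ni) * K0i)" unfolding K0N[symmetric] Kinv_def
          using K0c Nc Nic K0ic by (simp add: assoc_dim)
        thus ?thesis unfolding N1 using K0ic K01 by simp
      qed
      have KiK: "Kinv * K = 1\<^sub>m M" by (rule mat_mult_left_right_inverse[OF Kc Kinvc KKi])
      have invK: "invertible_mat K"
        unfolding invertible_mat_def inverts_mat_def square_mat.simps using Kc Kinvc KKi KiK by auto
      have bKi: "bnd Kinv (2 * c0)" unfolding Kinv_def by (rule bnd_mult[OF bNi c0(2) Nic K0ic]) simp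
      show ?thesis
        apply (rule conjI)
        subgoal using invK unfolding K_def .
        apply (intro allI impI)
        subgoal premises prems for E C H F L
        proof -
          have Ec: "E \<in> carrier_mat r n" unfolding r_def using prems(1) .
          have Cc: "C \<in> carrier_mat r m" unfolding r_def m_def using prems(2) .
          have Hc: "H \<in> carrier_mat q n" unfolding q_def using prems(3) .
          have Fc: "F \<in> carrier_mat q m" unfolding q_def m_def using prems(4) .
          have KX: "K * four_block_mat E C H F = 1\<^sub>m M" unfolding K_def using prems(5) .
          have svd: "trunc_svd p C L" using prems(6) .
          define X where "X = four_block_mat E C H F"
          have Xc: "X \<in> carrier_mat M M" unfolding X_def using four_block_carrier_mat[OF Ec Fc] Mnm Mrq by simp
          have XKi: "X = Kinv"
          proof -
            have "X = (Kinv * K) * X" unfolding KiK using Xc by simp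
            also have "\<dots> = Kinv * (K * X)" using Kinvc Kc Xc by simp
            finally show ?thesis unfolding X_def KX using Kinvc by simp
          qed
          have bX: "bnd X (2 * c0)" unfolding XKi by (rule bKi)
          have bE: "bnd E kE" unfolding kE_def
          proof (rule bnd_entries[OF Ec])
            fix i j assume "i < r" "j < n"
            hence "E $$ (i,j) = X $$ (i,j)" unfolding X_def using Ec Fc by simp
            thus "\<bar>E $$ (i,j)\<bar> \<le> 2 * c0" using entry_le_bnd[OF bX, of i j] Xc \<open>i < r\<close> \<open>j < n\<close> Mnm Mrq by simp
          qed
          have bF: "bnd F kF" unfolding kF_def
          proof (rule bnd_entries[OF Fc])
            fix i j assume "i < q" "j < m"
            hence "F $$ (i,j) = X $$ (i + r, j + n)" unfolding X_def using Ec Fc by simp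
            thus "\<bar>F $$ (i,j)\<bar> \<le> 2 * c0" using entry_le_bnd[OF bX, of "i + r" "j + n"] Xc \<open>i < q\<close> \<open>j < m\<close> Mnm Mrq by simp
          qed
          have bH: "bnd H kH" unfolding kH_def
          proof (rule bnd_entries[OF Hc])
            fix i j assume "i < q" "j < n"
            hence "H $$ (i,j) = X $$ (i + r, j)" unfolding X_def using Ec Fc by simp
            thus "\<bar>H $$ (i,j)\<bar> \<le> 2 * c0" using entry_le_bnd[OF bX, of "i + r" j] Xc \<open>i < q\<close> \<open>j < n\<close> Mnm Mrq by simp
          qed
          have XK: "X * K = 1\<^sub>m M" unfolding XKi by (rule KiK)
          have b3: "four_block_mat (A * E + B * H) (A * C + B * F) (G * E + D * H) (G * C + D * F)
              = four_block_mat (1\<^sub>m n) (0\<^sub>m n m) (0\<^sub>m m n) (1\<^sub>m m)"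
            using KX unfolding K_def mult_four_block_mat[OF Ac' Bc Gc' Dc' Ec Cc Hc Fc] using Mnm by simp
          have cb3: "A * E + B * H \<in> carrier_mat n n" "A * C + B * F \<in> carrier_mat n m"
            "G * E + D * H \<in> carrier_mat m n" "G * C + D * F \<in> carrier_mat m m"
            by (intro carrier_matI; use Ec Cc Hc Fc Ac' Gc' Dc' Bc in simp)+
          note bl3 = four_block_eq[OF cb3 one_carrier_mat zero_carrier_mat zero_carrier_mat one_carrier_mat b3]
          have b4: "four_block_mat (E * A + C * G) (E * B + C * D) (H * A + F * G) (H * B + F * D)
              = four_block_mat (1\<^sub>m r) (0\<^sub>m r q) (0\<^sub>m q r) (1\<^sub>m q)"
            using XK unfolding K_def X_def mult_four_block_mat[OF Ec Cc Hc Fc Ac' Bc Gc' Dc'] using Mrq by simp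
          have cb4: "E * A + C * G \<in> carrier_mat r r" "E * B + C * D \<in> carrier_mat r q"
            "H * A + F * G \<in> carrier_mat q r" "H * B + F * D \<in> carrier_mat q q"
            by (intro carrier_matI; use Ec Cc Hc Fc Ac' Gc' Dc' Bc in simp)+
          note bl4 = four_block_eq[OF cb4 one_carrier_mat zero_carrier_mat zero_carrier_mat one_carrier_mat b4]
          have sm1: "b * kH + b * kF * w0 * kE \<le> 1/2"
            using frac_le[OF _ Q2 Q0] kn w0 unfolding b_def \<epsilon>_def by (simp add: algebra_simps)
          have sm2: "gG * (kE * b * f0) \<le> 1/2"
            using frac_le[OF _ Q3 Q0] kn gG f0 unfolding b_def \<epsilon>_def by (simp add: algebra_simps)
          have "invertible_mat (four_block_mat E L H F) \<and>
            (\<exists>At Gt Dt. At \<in> carrier_mat n r \<and> Gt \<in> carrier_mat m r \<and> Dt \<in> carrier_mat m q \<and>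
               four_block_mat E L H F * four_block_mat At (0\<^sub>m n q) Gt Dt = 1\<^sub>m (n + m) \<and>
               four_block_mat At (0\<^sub>m n q) Gt Dt * four_block_mat E L H F = 1\<^sub>m (n + m) \<and>
               B = A * (L - C) * Dt \<and> A - At = A * (L - C) * Gt)"
            by (rule core[OF Ac' Bc Gc' Dc' Ec Cc Hc Fc C0c F0c n0 p0 q0 r_def mq C0D F0D GCDF0
                bl3(1) bl3(2) bl3(3) bl3(4) bl4(2) bB bE bF bH gG(2) f0(2) w0(2)
                b0 kn(1) kn(2) kn(3) gG(1) f0(1) w0(1) sm1 sm2 svd])
          thus ?thesis unfolding r_def m_def q_def Mnm[unfolded m_def, symmetric] .
        qed
        done
    qed
    done
qed


end
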